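(* Fix any $\varepsilon>0$ and $n\in\mathbb N_+$. Consider the algorithm which, given a simple undirected graph $G=([n],E)$: sets $\varepsilon_0=\varepsilon/2$; for each $v\in[n]$ independently chooses $c_1(v),c_2(v)\in\{-1,+1\}$ uniformly at random; lets $\ell(v)=|\{u:\{u,v\}\in E,\ c_1(u)=c_1(v)\}|$; for each $v$ samples independent $\zeta_v\sim\mathrm{DLap}(1/\varepsilon_0)$ and sets $c(v)=c_1(v)$ if $\ell(v)-\lceil\frac{d(v)-1}2\rceil+\zeta_v\le0$ and $c(v)=c_2(v)$ otherwise; and outputs $S=\{v:c(v)=+1\}$. This algorithm is $(\varepsilon,0)$-differentially private. Furthermore, if $G$ is triangle-free, then for every edge $\{u,v\}\in E$, the probability that exactly one of $u,v$ lies in $S$ is at least $$\frac12+\Omega\left(\frac1{\sqrt{d(u)+1/\varepsilon^2}}+\frac1{\sqrt{d(v)+1/\varepsilon^2}}\right),$$ with an absolute hidden constant.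
   Context: $d(v)$ is the degree of $v$ in $G$. $\mathrm{DLap}(1/\varepsilon_0)$ is the discrete Laplace distribution on $\mathbb Z$ with mass $\frac{e^{\varepsilon_0}-1}{e^{\varepsilon_0}+1}e^{-\varepsilon_0|x|}$ at $x$. Edge-level privacy: two graphs on vertex set $[n]$ are neighboring if they differ by exactly one edge; $(\varepsilon,0)$-DP means $\Pr[\mathcal M(G)\in T]\le e^\varepsilon\Pr[\mathcal M(G')\in T]$ for all neighboring $G,G'$ and output sets $T$. *)

theory Defs
  imports "HOL-Probability.Probability"
begin

text \<open>Vertex set [n] is represented as {0..<n}. A simple undirected graph is a set
of 2-element subsets of the vertex set.\<close>

definition simple_graph :: "nat \<Rightarrow> nat set set \<Rightarrow> bool" where
  "simple_graph n E \<longleftrightarrow> E \<subseteq> {{u, v} | u v. u \<noteq> v \<and> u < n \<and> v < n}"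

definition degree :: "nat set set \<Rightarrow> nat \<Rightarrow> nat" where
  "degree E v = card {u. {u, v} \<in> E}"

definition triangle_free :: "nat set set \<Rightarrow> bool" where
  "triangle_free E \<longleftrightarrow> \<not> (\<exists>a b c. {a, b} \<in> E \<and> {b, c} \<in> E \<and> {a, c} \<in> E)"

definition edge_neighbors :: "nat \<Rightarrow> nat set set \<Rightarrow> nat set set \<Rightarrow> bool" where
  "edge_neighbors n E E' \<longleftrightarrow> simple_graph n E \<and> simple_graph n E' \<and>
     card ((E - E') \<union> (E' - E)) = 1"

text \<open>Discrete Laplace distribution DLap(1/eps0) on the integers, with mass
  (e^eps0 - 1)/(e^eps0 + 1) * e^(-eps0 |x|) at x.\<close>
definition dlap :: "real \<Rightarrow> int pmf" where
  "dlap eps0 = embed_pmf (\<lambda>x::int. (exp eps0 - 1) / (exp eps0 + 1) * exp (- eps0 * \<bar>real_of_int x\<bar>))"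

text \<open>Uniform random sign: True stands for +1, False for -1.\<close>
definition coin :: "bool pmf" where
  "coin = pmf_of_set UNIV"

definition alg_output :: "nat \<Rightarrow> nat set set \<Rightarrow> (nat \<Rightarrow> bool) \<Rightarrow> (nat \<Rightarrow> bool) \<Rightarrow> (nat \<Rightarrow> int) \<Rightarrow> nat set" where
  "alg_output n E c1 c2 zeta =
     (let l = (\<lambda>v. card {u. {u, v} \<in> E \<and> c1 u = c1 v});
          c = (\<lambda>v. if int (l v) - \<lceil>(real (degree E v) - 1) / 2\<rceil> + zeta v \<le> 0
                    then c1 v else c2 v)
      in {v. v < n \<and> c v})"

definition alg :: "real \<Rightarrow> nat \<Rightarrow> nat set set \<Rightarrow> nat set pmf" where
  "alg eps n E =
     map_pmf (\<lambda>r. alg_output n E (\<lambda>v. fst (r v)) (\<lambda>v. fst (snd (r v))) (\<lambda>v. snd (snd (r v))))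
       (Pi_pmf {..<n} (False, False, 0) (\<lambda>_. pair_pmf coin (pair_pmf coin (dlap (eps / 2)))))"

end

theory Submission
  imports Defs
begin


lemma dlap_sum_aux:
  fixes e0 :: real assumes e0: "e0 > 0"
  shows "(\<integral>\<^sup>+x. ennreal ((exp e0 - 1) / (exp e0 + 1) * exp (- e0 * \<bar>real_of_int x\<bar>)) \<partial>count_space UNIV) = 1"
proof -
  define a where "a = (exp e0 - 1) / (exp e0 + 1)"
  define r where "r = exp (- e0)"
  have r0: "0 < r" "r < 1" using e0 by (auto simp: r_def)
  have a0: "a \<ge> 0" using e0 by (auto simp: a_def)
  define f where "f = (\<lambda>x::int. ennreal (a * exp (- e0 * \<bar>real_of_int x\<bar>)))"
  have "(\<integral>\<^sup>+x. f x \<partial>count_space UNIV) =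
        (\<integral>\<^sup>+x. f x * indicator {0..} x + f x * indicator {..<0} x \<partial>count_space UNIV)"
    by (intro nn_integral_cong) (auto simp: indicator_def)
  also have "\<dots> = (\<integral>\<^sup>+x. f x * indicator {0..} x \<partial>count_space UNIV) + (\<integral>\<^sup>+x. f x * indicator {..<0} x \<partial>count_space UNIV)"
    by (rule nn_integral_add) auto
  also have "(\<integral>\<^sup>+x. f x * indicator {0..} x \<partial>count_space UNIV) = (\<integral>\<^sup>+x. f x \<partial>count_space {0..})"
    by (simp add: nn_integral_count_space_indicator)
  also have "\<dots> = (\<integral>\<^sup>+n. f (int n) \<partial>count_space UNIV)"
  proof (rule nn_integral_bij_count_space[symmetric])
    show "bij_betw int UNIV {0..}"
      by (auto simp: bij_betw_def image_def intro: exI[of _ "nat _"])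
  qed
  also have "\<dots> = (\<Sum>n. ennreal (a * r ^ n))"
    unfolding nn_integral_count_space_nat
    by (intro suminf_cong) (simp add: f_def r_def exp_of_nat_mult[symmetric] mult_ac)
  also have "\<dots> = ennreal (a / (1 - r))"
  proof -
    have "(\<lambda>n. a * r ^ n) sums (a * (1 / (1 - r)))"
      using r0 by (intro sums_mult geometric_sums) auto
    then show ?thesis using a0 r0 by (subst suminf_ennreal2) (auto simp: sums_iff)
  qed
  also have "(\<integral>\<^sup>+x. f x * indicator {..<0} x \<partial>count_space UNIV) = (\<integral>\<^sup>+x. f x \<partial>count_space {..<0})"
    by (simp add: nn_integral_count_space_indicator)
  also have "\<dots> = (\<integral>\<^sup>+n. f (- int n - 1) \<partial>count_space UNIV)"
  proof (rule nn_integral_bij_count_space[symmetric])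
    show "bij_betw (\<lambda>n. - int n - 1) UNIV {..<0}"
      by (auto simp: bij_betw_def inj_on_def image_def intro: exI[of _ "nat (- _ - 1)"])
  qed
  also have "\<dots> = (\<Sum>n. ennreal (a * r * r ^ n))"
    unfolding nn_integral_count_space_nat
    by (intro suminf_cong) (simp add: f_def r_def exp_of_nat_mult[symmetric] mult_ac exp_add[symmetric] algebra_simps)
  also have "\<dots> = ennreal (a * r / (1 - r))"
  proof -
    have "(\<lambda>n. a * r * r ^ n) sums (a * r * (1 / (1 - r)))"
      using r0 by (intro sums_mult geometric_sums) auto
    then show ?thesis using a0 r0 by (subst suminf_ennreal2) (auto simp: sums_iff)
  qed
  also have "ennreal (a / (1 - r)) + ennreal (a * r / (1 - r)) = ennreal (a / (1 - r) + a * r / (1 - r))"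
    using a0 r0 by (intro ennreal_plus[symmetric]) auto
  also have "a / (1 - r) + a * r / (1 - r) = 1"
  proof -
    have rr: "r = 1 / exp e0" by (simp add: r_def exp_minus field_simps)
    have E1: "exp e0 > 1" using e0 by simp
    have E2: "exp e0 * exp e0 \<noteq> 1" using mult_strict_mono[OF E1 E1] by auto
    have "a / (1 - r) + a * r / (1 - r) = a * (1 + r) / (1 - r)" by (simp add: add_divide_distrib[symmetric] distrib_left)
    also have "\<dots> = 1" unfolding rr a_def using E1 E2 by (simp add: field_simps)
    finally show ?thesis .
  qed
  finally show ?thesis by (simp add: f_def a_def)
qed



definition dla :: "real \<Rightarrow> real" where "dla e0 = (exp e0 - 1) / (exp e0 + 1)"

lemma pmf_dlap: assumes "e0 > 0"
  shows "pmf (dlap e0) x = dla e0 * exp (- e0 * \<bar>real_of_int x\<bar>)"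
  unfolding dlap_def dla_def
proof (rule pmf_embed_pmf)
  show "\<And>x. 0 \<le> (exp e0 - 1) / (exp e0 + 1) * exp (- e0 * \<bar>real_of_int x\<bar>)"
    using assms by (intro mult_nonneg_nonneg divide_nonneg_nonneg) auto
qed (rule dlap_sum_aux[OF assms])

lemma dla_pos: "e0 > 0 \<Longrightarrow> dla e0 > 0"
proof -
  assume "e0 > 0"
  moreover have "exp e0 + 1 > 0" using exp_gt_zero[of e0] by linarith
  ultimately show ?thesis unfolding dla_def by (intro divide_pos_pos) auto
qed

lemma prob_le_pointwise:
  assumes "\<And>x. x \<in> A \<Longrightarrow> pmf p x \<le> c * pmf q x" "c \<ge> 0"
  shows "measure_pmf.prob p A \<le> c * measure_pmf.prob q A"
proof -
  have "ennreal (measure_pmf.prob p A) = emeasure (measure_pmf p) A"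
    by (simp add: measure_pmf.emeasure_eq_measure)
  also have "\<dots> = (\<integral>\<^sup>+x. indicator A x \<partial>measure_pmf p)" by simp
  also have "\<dots> = (\<integral>\<^sup>+x. ennreal (pmf p x) * indicator A x \<partial>count_space UNIV)"
    by (rule nn_integral_measure_pmf)
  also have "\<dots> \<le> (\<integral>\<^sup>+x. ennreal c * (ennreal (pmf q x) * indicator A x) \<partial>count_space UNIV)"
    using assms by (intro nn_integral_mono) (auto simp: indicator_def ennreal_mult[symmetric] intro: ennreal_leI)
  also have "\<dots> = ennreal c * (\<integral>\<^sup>+x. ennreal (pmf q x) * indicator A x \<partial>count_space UNIV)"
    by (rule nn_integral_cmult) auto
  also have "(\<integral>\<^sup>+x. ennreal (pmf q x) * indicator A x \<partial>count_space UNIV) = (\<integral>\<^sup>+x. indicator A x \<partial>measure_pmf q)"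
    by (rule nn_integral_measure_pmf[symmetric])
  also have "\<dots> = ennreal (measure_pmf.prob q A)"
    by (simp add: measure_pmf.emeasure_eq_measure)
  also have "ennreal c * \<dots> = ennreal (c * measure_pmf.prob q A)"
    using assms by (simp add: ennreal_mult)
  finally show ?thesis using assms by (simp add: ennreal_le_iff)
qed

lemma pmf_map_shift: "pmf (map_pmf (\<lambda>x::int. x + s) p) y = pmf p (y - s)"
proof -
  have "pmf (map_pmf (\<lambda>x::int. x + s) p) ((y - s) + s) = pmf p (y - s)"
    by (rule pmf_map_inj') (auto simp: inj_on_def)
  then show ?thesis by simp
qed

lemma pmf_map_shift': "pmf (map_pmf (\<lambda>x::int. x - s) p) y = pmf p (y + s)"
  using pmf_map_shift[of "- s" p y] by simp

lemma img_shift: "(\<lambda>z::int. z + s) ` A = {z. z - s \<in> A}"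
proof (intro set_eqI iffI)
  fix z assume "z \<in> {z. z - s \<in> A}"
  then have "z - s \<in> A" "z = (z - s) + s" by auto
  then show "z \<in> (\<lambda>z. z + s) ` A" by (metis imageI)
qed auto

lemma dlap_shift_pmf:
  assumes e0: "e0 > 0" and s: "\<bar>s\<bar> \<le> 1"
  shows "pmf (dlap e0) (y + s) \<le> exp e0 * pmf (dlap e0) y"
proof -
  have "- e0 * \<bar>real_of_int (y + s)\<bar> \<le> e0 + - e0 * \<bar>real_of_int y\<bar>"
  proof -
    have "\<bar>real_of_int y\<bar> \<le> \<bar>real_of_int (y + s)\<bar> + 1" using s by linarith
    then have "e0 * \<bar>real_of_int y\<bar> \<le> e0 * (\<bar>real_of_int (y + s)\<bar> + 1)"
      using e0 by (intro mult_left_mono) auto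
    then show ?thesis by (simp add: algebra_simps)
  qed
  then have "exp (- e0 * \<bar>real_of_int (y + s)\<bar>) \<le> exp (e0 + - e0 * \<bar>real_of_int y\<bar>)"
    by (simp only: exp_le_cancel_iff)
  also have "\<dots> = exp e0 * exp (- e0 * \<bar>real_of_int y\<bar>)" by (rule exp_add)
  finally have "dla e0 * exp (- e0 * \<bar>real_of_int (y + s)\<bar>) \<le> dla e0 * (exp e0 * exp (- e0 * \<bar>real_of_int y\<bar>))"
    using dla_pos[OF e0] by (intro mult_left_mono) auto
  then show ?thesis by (simp add: pmf_dlap[OF e0] mult_ac)
qed

lemma dlap_shift_prob:
  assumes e0: "e0 > 0" and s: "\<bar>s\<bar> \<le> 1"
  shows "measure_pmf.prob (dlap e0) ((\<lambda>z. z + s) ` A) \<le> exp e0 * measure_pmf.prob (dlap e0) A"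
proof -
  have "(\<lambda>z. z + s) ` A = (\<lambda>z. z - s) -` A" by (simp add: img_shift vimage_def)
  then have "measure_pmf.prob (dlap e0) ((\<lambda>z. z + s) ` A) = measure_pmf.prob (map_pmf (\<lambda>z. z - s) (dlap e0)) A"
    by simp
  also have "\<dots> \<le> exp e0 * measure_pmf.prob (dlap e0) A"
    by (rule prob_le_pointwise) (use dlap_shift_pmf[OF e0 s] in \<open>auto simp: pmf_map_shift'\<close>)
  finally show ?thesis .
qed

lemma dp_coord:
  assumes e0: "e0 > 0" and th: "\<bar>\<theta> - \<theta>'\<bar> \<le> 1"
  shows "pmf (map_pmf (\<lambda>z. z \<le> \<theta>) (dlap e0)) b \<le> exp e0 * pmf (map_pmf (\<lambda>z. z \<le> \<theta>') (dlap e0)) b"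
proof -
  let ?P = "measure_pmf.prob (dlap e0)"
  have E1: "exp e0 \<ge> 1" using e0 by simp
  show ?thesis
  proof (cases b)
    case True
    have eq: "(\<lambda>z. z \<le> \<theta>) -` {b} = {z. z \<le> \<theta>}" "(\<lambda>z. z \<le> \<theta>') -` {b} = {z. z \<le> \<theta>'}" using True by (auto simp: vimage_def)
    have "?P {z. z \<le> \<theta>} \<le> exp e0 * ?P {z. z \<le> \<theta>'}"
    proof (cases "\<theta> \<le> \<theta>'")
      case True
      have "?P {z. z \<le> \<theta>} \<le> ?P {z. z \<le> \<theta>'}" using True by (intro measure_pmf.finite_measure_mono) auto
      also have "\<dots> \<le> exp e0 * ?P {z. z \<le> \<theta>'}" using E1 by (simp add: mult_le_cancel_right1)
      finally show ?thesis .
    next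
      case False
      then have "\<theta> = \<theta>' + 1" using th by auto
      then have eqs: "{z. z \<le> \<theta>} = (\<lambda>z. z + 1) ` {z. z \<le> \<theta>'}"
        by (auto simp: img_shift)
      have "?P ((\<lambda>z. z + 1) ` {z. z \<le> \<theta>'}) \<le> exp e0 * ?P {z. z \<le> \<theta>'}"
        by (rule dlap_shift_prob[OF e0]) simp
      then show ?thesis unfolding eqs .
    qed
    then show ?thesis by (simp add: pmf_map eq)
  next
    case False
    have eq: "(\<lambda>z. z \<le> \<theta>) -` {b} = {z. \<theta> < z}" "(\<lambda>z. z \<le> \<theta>') -` {b} = {z. \<theta>' < z}" using False by (auto simp: vimage_def)
    have "?P {z. \<theta> < z} \<le> exp e0 * ?P {z. \<theta>' < z}"
    proof (cases "\<theta>' \<le> \<theta>")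
      case True
      have "?P {z. \<theta> < z} \<le> ?P {z. \<theta>' < z}" using True by (intro measure_pmf.finite_measure_mono) auto
      also have "\<dots> \<le> exp e0 * ?P {z. \<theta>' < z}" using E1 by (simp add: mult_le_cancel_right1)
      finally show ?thesis .
    next
      case False
      then have "\<theta> = \<theta>' - 1" using th by auto
      then have eqs: "{z. \<theta> < z} = (\<lambda>z. z + (-1)) ` {z. \<theta>' < z}"
        unfolding img_shift by auto
      have "?P ((\<lambda>z. z + (-1)) ` {z. \<theta>' < z}) \<le> exp e0 * ?P {z. \<theta>' < z}"
        by (rule dlap_shift_prob[OF e0]) simp
      then show ?thesis unfolding eqs .
    qed
    then show ?thesis by (simp add: pmf_map eq)
  qed
qed



lemma Pi_pmf_map_dep:
  assumes "finite A"
  shows "Pi_pmf A d' (\<lambda>x. map_pmf (g x) (p x)) = map_pmf (\<lambda>h x. if x \<in> A then g x (h x) else d') (Pi_pmf A d p)"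
proof -
  have "Pi_pmf A d' (\<lambda>x. map_pmf (g x) (p x)) = Pi_pmf A d' (\<lambda>x. p x \<bind> (\<lambda>y. return_pmf (g x y)))"
    by (simp add: map_pmf_def)
  also have "\<dots> = Pi_pmf A d p \<bind> (\<lambda>h. Pi_pmf A d' (\<lambda>x. return_pmf (g x (h x))))"
    by (rule Pi_pmf_bind[OF assms])
  also have "\<dots> = Pi_pmf A d p \<bind> (\<lambda>h. return_pmf (\<lambda>x. if x \<in> A then g x (h x) else d'))"
    using assms by simp
  also have "\<dots> = map_pmf (\<lambda>h x. if x \<in> A then g x (h x) else d') (Pi_pmf A d p)"
    by (simp add: map_pmf_def)
  finally show ?thesis .
qed

lemma pair_pmf_bind_map: "pair_pmf P R = P \<bind> (\<lambda>a. map_pmf (Pair a) R)"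
  by (simp add: pair_pmf_def map_pmf_def)

lemma Pi_pmf_pair:
  assumes "finite A"
  shows "Pi_pmf A (da, db) (\<lambda>x. pair_pmf (P x) (R x)) =
         Pi_pmf A da P \<bind> (\<lambda>f. map_pmf (\<lambda>h x. if x \<in> A then (f x, h x) else (da, db)) (Pi_pmf A db R))"
proof -
  have "Pi_pmf A (da, db) (\<lambda>x. pair_pmf (P x) (R x)) = Pi_pmf A (da, db) (\<lambda>x. P x \<bind> (\<lambda>a. map_pmf (Pair a) (R x)))"
    by (simp add: pair_pmf_bind_map)
  also have "\<dots> = Pi_pmf A da P \<bind> (\<lambda>f. Pi_pmf A (da, db) (\<lambda>x. map_pmf (Pair (f x)) (R x)))"
    by (rule Pi_pmf_bind[OF assms])
  also have "\<dots> = Pi_pmf A da P \<bind> (\<lambda>f. map_pmf (\<lambda>h x. if x \<in> A then (f x, h x) else (da, db)) (Pi_pmf A db R))"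
    by (simp add: Pi_pmf_map_dep[OF assms, where d = db])
  finally show ?thesis .
qed

definition thr :: "nat set set \<Rightarrow> (nat \<Rightarrow> bool) \<Rightarrow> nat \<Rightarrow> int" where
  "thr E c1 v = \<lceil>(real (degree E v) - 1) / 2\<rceil> - int (card {u. {u, v} \<in> E \<and> c1 u = c1 v})"

lemma alg_output_thr:
  "alg_output n E c1 c2 z = {v. v < n \<and> (if z v \<le> thr E c1 v then c1 v else c2 v)}"
  unfolding alg_output_def thr_def Let_def by (intro Collect_cong) (auto simp: algebra_simps)

lemma alg_bind:
  "alg eps n E = Pi_pmf {..<n} False (\<lambda>_. coin) \<bind> (\<lambda>f1. Pi_pmf {..<n} False (\<lambda>_. coin) \<bind> (\<lambda>f2.
      map_pmf (\<lambda>z. alg_output n E (\<lambda>v. if v < n then f1 v else False) (\<lambda>v. if v < n then f2 v else False)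
                 (\<lambda>v. if v < n then z v else 0)) (Pi_pmf {..<n} 0 (\<lambda>_. dlap (eps / 2)))))"
proof -
  have fin: "finite {..<n}" by simp
  show ?thesis
    unfolding alg_def
    by (simp add: Pi_pmf_pair[OF fin, where da = False and db = "(False, 0)"]
                  Pi_pmf_pair[OF fin, where da = False and db = 0] map_bind_pmf map_pmf_comp
                  if_distrib[of fst] if_distrib[of snd] cong: if_cong)
qed

lemma bind_prob_mono:
  assumes "\<And>x. x \<in> set_pmf M \<Longrightarrow> measure_pmf.prob (N x) X \<le> c * measure_pmf.prob (N' x) X" "c \<ge> 0"
  shows "measure_pmf.prob (M \<bind> N) X \<le> c * measure_pmf.prob (M \<bind> N') X"
proof -
  have "ennreal (measure_pmf.prob (M \<bind> N) X) = emeasure (measure_pmf (M \<bind> N)) X"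
    by (simp add: measure_pmf.emeasure_eq_measure)
  also have "\<dots> = (\<integral>\<^sup>+x. emeasure (measure_pmf (N x)) X \<partial>measure_pmf M)" by simp
  also have "\<dots> \<le> (\<integral>\<^sup>+x. ennreal c * emeasure (measure_pmf (N' x)) X \<partial>measure_pmf M)"
  proof (intro nn_integral_mono_AE AE_pmfI)
    fix x assume "x \<in> set_pmf M"
    then have "ennreal (measure_pmf.prob (N x) X) \<le> ennreal (c * measure_pmf.prob (N' x) X)"
      using assms by (intro ennreal_leI) auto
    then show "emeasure (measure_pmf (N x)) X \<le> ennreal c * emeasure (measure_pmf (N' x)) X"
      using assms by (simp add: measure_pmf.emeasure_eq_measure ennreal_mult)
  qed
  also have "\<dots> = ennreal c * (\<integral>\<^sup>+x. emeasure (measure_pmf (N' x)) X \<partial>measure_pmf M)"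
    by (rule nn_integral_cmult) auto
  also have "(\<integral>\<^sup>+x. emeasure (measure_pmf (N' x)) X \<partial>measure_pmf M) = emeasure (measure_pmf (M \<bind> N')) X"
    by simp
  also have "\<dots> = ennreal (measure_pmf.prob (M \<bind> N') X)"
    by (simp add: measure_pmf.emeasure_eq_measure)
  also have "ennreal c * \<dots> = ennreal (c * measure_pmf.prob (M \<bind> N') X)"
    using assms by (simp add: ennreal_mult)
  finally show ?thesis using assms by (simp add: ennreal_le_iff)
qed

lemma sg_mem:
  assumes "simple_graph n E" "{u, v} \<in> E"
  shows "u < n" "v < n" "u \<noteq> v"
proof -
  from assms obtain x y where xy: "{u, v} = {x, y}" "x \<noteq> y" "x < n" "y < n"
    unfolding simple_graph_def by blast
  then show "u < n" "v < n" by (auto simp: doubleton_eq_iff)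
  show "u \<noteq> v" using xy by (auto simp: doubleton_eq_iff)
qed

lemma nb_finite:
  assumes "simple_graph n E"
  shows "finite {u. {u, v} \<in> E \<and> P u}"
  by (rule finite_subset[of _ "{..<n}"]) (use sg_mem[OF assms] in auto)

lemma en_cases:
  assumes "edge_neighbors n E E'"
  shows "\<exists>a b. a \<noteq> b \<and> ((E' = insert {a, b} E \<and> {a, b} \<notin> E) \<or> (E = insert {a, b} E' \<and> {a, b} \<notin> E'))"
proof -
  from assms have sg: "simple_graph n E" "simple_graph n E'" and c: "card ((E - E') \<union> (E' - E)) = 1"
    unfolding edge_neighbors_def by auto
  from c obtain e where e: "(E - E') \<union> (E' - E) = {e}" by (auto simp: card_Suc_eq)
  have e1: "e \<in> (E - E') \<union> (E' - E)" using e by simp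
  have e2: "x = e" if "x \<in> (E - E') \<union> (E' - E)" for x using that e by simp
  show ?thesis
  proof (cases "e \<in> E")
    case True
    have h: "e \<notin> E'" "E = insert e E'" using True e1 e2 by auto
    from True sg(1) obtain a b where ab: "e = {a, b}" "a \<noteq> b"
      unfolding simple_graph_def by blast
    show ?thesis by (rule exI[of _ a], rule exI[of _ b]) (use h ab in simp)
  next
    case False
    have h: "e \<notin> E" "E' = insert e E" using False e1 e2 by auto
    from h e1 sg(2) obtain a b where ab: "e = {a, b}" "a \<noteq> b"
      unfolding simple_graph_def by blast
    show ?thesis by (rule exI[of _ a], rule exI[of _ b]) (use h ab in simp)
  qed
qed

lemma ceil_half_step: "\<lceil>(x + 1 - 1) / 2\<rceil> - \<lceil>(x - 1) / 2\<rceil> \<in> {0, 1::int}"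
proof -
  have "\<lceil>(x - 1) / 2\<rceil> \<le> \<lceil>(x + 1 - 1) / 2\<rceil>" by (intro ceiling_mono) auto
  moreover have "\<lceil>(x + 1 - 1) / 2\<rceil> \<le> \<lceil>(x - 1) / 2 + 1\<rceil>" by (intro ceiling_mono) (auto simp: field_simps)
  ultimately show ?thesis by auto
qed

lemma thr_other:
  assumes "E' = insert {a, b} E" "v \<noteq> a" "v \<noteq> b"
  shows "thr E' c v = thr E c v"
proof -
  have "\<And>u. {u, v} \<in> E' \<longleftrightarrow> {u, v} \<in> E" using assms by (auto simp: doubleton_eq_iff)
  then show ?thesis unfolding thr_def degree_def by simp
qed

lemma thr_end:
  assumes sg: "simple_graph n E" and E': "E' = insert {a, b} E" "{a, b} \<notin> E" "a \<noteq> b"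
  shows "\<bar>thr E' c a - thr E c a\<bar> \<le> 1"
proof -
  let ?N = "{u. {u, a} \<in> E}" and ?L = "{u. {u, a} \<in> E \<and> c u = c a}"
  have fN: "finite ?N" "finite ?L" using nb_finite[OF sg, where P = "\<lambda>_. True"] nb_finite[OF sg, where P = "\<lambda>u. c u = c a"] by auto
  have bN: "b \<notin> ?N" using E' by (auto simp: insert_commute)
  have N': "{u. {u, a} \<in> E'} = insert b ?N" using E' by (auto simp: doubleton_eq_iff insert_commute)
  have L': "{u. {u, a} \<in> E' \<and> c u = c a} = (if c b = c a then insert b ?L else ?L)"
    using E' by (auto simp: doubleton_eq_iff insert_commute)
  have d: "degree E' a = degree E a + 1" unfolding degree_def N' using fN bN by simp
  have l: "int (card {u. {u, a} \<in> E' \<and> c u = c a}) - int (card ?L) \<in> {0, 1}"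
    unfolding L' using fN bN by auto
  have cs: "\<lceil>(real (degree E a) + 1 - 1) / 2\<rceil> - \<lceil>(real (degree E a) - 1) / 2\<rceil> \<in> {0, 1::int}"
    by (rule ceil_half_step)
  show ?thesis using l cs unfolding thr_def d by auto
qed

lemma thr_diff:
  assumes sg: "simple_graph n E" and E': "E' = insert {a, b} E" "{a, b} \<notin> E" "a \<noteq> b"
  shows "\<bar>thr E' c v - thr E c v\<bar> \<le> 1"
proof -
  consider "v = a" | "v = b" | "v \<noteq> a" "v \<noteq> b" by blast
  then show ?thesis
  proof cases
    case 1 then show ?thesis using thr_end[OF assms] by simp
  next
    case 2
    have "E' = insert {b, a} E" "{b, a} \<notin> E" "b \<noteq> a" using E' by (auto simp: insert_commute)
    then show ?thesis using thr_end[OF sg, of E' b a c] 2 by simp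
  next
    case 3 then show ?thesis using thr_other[OF E'(1)] by simp
  qed
qed

lemma prod_weighted_le:
  fixes f g c :: "'a \<Rightarrow> real"
  assumes "finite A" "\<And>x. x \<in> A \<Longrightarrow> 0 \<le> f x" "\<And>x. x \<in> A \<Longrightarrow> f x \<le> c x * g x"
  shows "prod f A \<le> prod c A * prod g A"
proof -
  have "prod f A \<le> prod (\<lambda>x. c x * g x) A" using assms by (intro prod_mono) auto
  then show ?thesis by (simp add: prod.distrib)
qed



lemma prod_if_const:
  fixes c :: real
  assumes "finite A" "c \<ge> 1" "card (A \<inter> S) \<le> 2"
  shows "(\<Prod>x\<in>A. if x \<in> S then c else 1) \<le> c ^ 2"
proof -
  have "(\<Prod>x\<in>A. if x \<in> S then c else 1) = c ^ card (A \<inter> S)"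
    using assms(1) by (simp add: prod.If_cases Int_def)
  also have "\<dots> \<le> c ^ 2" using assms by (intro power_increasing) auto
  finally show ?thesis .
qed

lemma dp_fixed:
  assumes eps: "eps > 0" and sg: "simple_graph n E" "simple_graph n E'"
    and thd: "\<And>v. \<bar>thr E' c1 v - thr E c1 v\<bar> \<le> 1"
    and tho: "\<And>v. v \<noteq> a \<Longrightarrow> v \<noteq> b \<Longrightarrow> thr E' c1 v = thr E c1 v"
  shows "measure_pmf.prob (map_pmf (\<lambda>z. alg_output n E c1 c2 (\<lambda>v. if v < n then z v else 0)) (Pi_pmf {..<n} 0 (\<lambda>_. dlap (eps / 2)))) T
         \<le> exp eps * measure_pmf.prob (map_pmf (\<lambda>z. alg_output n E' c1 c2 (\<lambda>v. if v < n then z v else 0)) (Pi_pmf {..<n} 0 (\<lambda>_. dlap (eps / 2)))) T"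
proof -
  define Z where "Z = Pi_pmf {..<n} (0::int) (\<lambda>_. dlap (eps / 2))"
  define W where "W k = {v. v < n \<and> (if k v then c1 v else c2 v)}" for k :: "nat \<Rightarrow> bool"
  define K where "K F z = (\<lambda>v. if v \<in> {..<n} then z v \<le> thr F c1 v else False)" for F z
  define PP where "PP F = Pi_pmf {..<n} False (\<lambda>v. map_pmf (\<lambda>\<zeta>. \<zeta> \<le> thr F c1 v) (dlap (eps / 2)))" for F
  have eqF: "(\<lambda>z. alg_output n F c1 c2 (\<lambda>v. if v < n then z v else 0)) = W \<circ> K F" for F
    by (auto simp: alg_output_thr W_def K_def fun_eq_iff)
  have mapK: "map_pmf (K F) Z = PP F" for F
    unfolding PP_def Z_def K_def by (subst Pi_pmf_map_dep[where d = 0]) auto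
  have pr: "measure_pmf.prob (map_pmf (\<lambda>z. alg_output n F c1 c2 (\<lambda>v. if v < n then z v else 0)) Z) T
            = measure_pmf.prob (PP F) (W -` T)" for F
  proof -
    have "measure_pmf.prob (map_pmf (W \<circ> K F) Z) T = measure_pmf.prob (map_pmf W (map_pmf (K F) Z)) T"
      by (simp only: map_pmf_compose o_apply)
    also have "\<dots> = measure_pmf.prob (PP F) (W -` T)" by (simp only: mapK measure_map_pmf)
    finally show ?thesis unfolding eqF .
  qed
  have e0: "eps / 2 > 0" using eps by simp
  have pw: "pmf (PP E) k \<le> exp eps * pmf (PP E') k" for k
  proof (cases "\<forall>x. x \<notin> {..<n} \<longrightarrow> k x = False")
    case False
    then show ?thesis unfolding PP_def by (subst pmf_Pi) auto
  next
    case True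
    define cf where "cf x = (if x \<in> {a, b} then exp (eps / 2) else 1)" for x
    have "pmf (PP E) k = (\<Prod>x\<in>{..<n}. pmf (map_pmf (\<lambda>\<zeta>. \<zeta> \<le> thr E c1 x) (dlap (eps / 2))) (k x))"
      unfolding PP_def using True by (subst pmf_Pi) auto
    also have "\<dots> \<le> prod cf {..<n} * (\<Prod>x\<in>{..<n}. pmf (map_pmf (\<lambda>\<zeta>. \<zeta> \<le> thr E' c1 x) (dlap (eps / 2))) (k x))"
    proof (rule prod_weighted_le)
      fix x
      show "pmf (map_pmf (\<lambda>\<zeta>. \<zeta> \<le> thr E c1 x) (dlap (eps / 2))) (k x)
            \<le> cf x * pmf (map_pmf (\<lambda>\<zeta>. \<zeta> \<le> thr E' c1 x) (dlap (eps / 2))) (k x)"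
      proof (cases "x \<in> {a, b}")
        case True
        have "\<bar>thr E c1 x - thr E' c1 x\<bar> \<le> 1" using thd[of x] by simp
        then show ?thesis using dp_coord[OF e0] True by (simp add: cf_def)
      next
        case False
        then show ?thesis using tho[of x] by (simp add: cf_def)
      qed
    qed auto
    also have "(\<Prod>x\<in>{..<n}. pmf (map_pmf (\<lambda>\<zeta>. \<zeta> \<le> thr E' c1 x) (dlap (eps / 2))) (k x)) = pmf (PP E') k"
      unfolding PP_def using True by (subst pmf_Pi) auto
    finally have 1: "pmf (PP E) k \<le> prod cf {..<n} * pmf (PP E') k" .
    have c1: "card ({..<n} \<inter> {a, b}) \<le> card {a, b}" by (rule card_mono) auto
    have c2: "card {a, b} \<le> 2" by (cases "a = b") auto
    have "prod cf {..<n} \<le> exp (eps / 2) ^ 2"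
      unfolding cf_def using e0 c1 c2 by (intro prod_if_const) auto
    also have "exp (eps / 2) ^ 2 = exp eps" by (simp add: exp_double[symmetric])
    finally have 2: "prod cf {..<n} \<le> exp eps" .
    show ?thesis using 1 mult_right_mono[OF 2 pmf_nonneg[of "PP E'" k]] by linarith
  qed
  show ?thesis
    unfolding Z_def[symmetric] pr
    by (rule prob_le_pointwise) (use pw in auto)
qed

lemma dp_part:
  assumes eps: "eps > 0" and en: "edge_neighbors n E E'"
  shows "measure_pmf.prob (alg eps n E) T \<le> exp eps * measure_pmf.prob (alg eps n E') T"
proof -
  have sg: "simple_graph n E" "simple_graph n E'" using en unfolding edge_neighbors_def by auto
  obtain a b where ab: "a \<noteq> b" "(E' = insert {a, b} E \<and> {a, b} \<notin> E) \<or> (E = insert {a, b} E' \<and> {a, b} \<notin> E')"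
    using en_cases[OF en] by blast
  have th: "\<bar>thr E' c v - thr E c v\<bar> \<le> 1 \<and> (v \<noteq> a \<longrightarrow> v \<noteq> b \<longrightarrow> thr E' c v = thr E c v)" for c v
    using ab(2)
  proof
    assume h: "E' = insert {a, b} E \<and> {a, b} \<notin> E"
    show ?thesis using thr_diff[OF sg(1), of E' a b c v] thr_other[of E' a b E v c] h ab(1) by auto
  next
    assume h: "E = insert {a, b} E' \<and> {a, b} \<notin> E'"
    show ?thesis using thr_diff[OF sg(2), of E a b c v] thr_other[of E a b E' v c] h ab(1) by auto
  qed
  show ?thesis
    unfolding alg_bind
  proof (intro bind_prob_mono)
    fix f1 f2
    show "measure_pmf.prob
           (map_pmf (\<lambda>z. alg_output n E (\<lambda>v. if v < n then f1 v else False) (\<lambda>v. if v < n then f2 v else False)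
               (\<lambda>v. if v < n then z v else 0)) (Pi_pmf {..<n} 0 (\<lambda>_. dlap (eps / 2)))) T
          \<le> exp eps * measure_pmf.prob
           (map_pmf (\<lambda>z. alg_output n E' (\<lambda>v. if v < n then f1 v else False) (\<lambda>v. if v < n then f2 v else False)
               (\<lambda>v. if v < n then z v else 0)) (Pi_pmf {..<n} 0 (\<lambda>_. dlap (eps / 2)))) T"
      by (rule dp_fixed[OF eps sg, of _ a b]) (use th in auto)
  qed auto
qed



lemma binom_step: "0 < k \<Longrightarrow> k * (m choose k) = (m - (k - 1)) * (m choose (k - 1))"
  using times_binomial_minus1_eq[of k m] binomial_absorb_comp[of m "k - 1"] by simp

lemma central_even: "real ((2 * n) choose n) ^ 2 * (4 * n + 1) \<ge> 16 ^ n"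
proof (induction n)
  case 0 then show ?case by simp
next
  case (Suc n)
  define X where "X = real ((2 * n) choose n)"
  define A where "A = real ((2 * n + 1) choose (n + 1))"
  define Y where "Y = real ((2 * n + 2) choose (n + 1))"
  have a: "(n + 1) * ((2 * n + 1) choose (n + 1)) = (2 * n + 1) * ((2 * n) choose n)"
    using Suc_times_binomial_eq[of "2 * n" n] by (simp add: mult_ac)
  have b: "(n + 1) * ((2 * n + 2) choose (n + 1)) = (2 * n + 2) * ((2 * n + 1) choose n)"
    using Suc_times_binomial[of n "2 * n + 1"] by (simp add: mult_ac)
  have c: "(2 * n + 1) choose n = (2 * n + 1) choose (n + 1)"
    using binomial_symmetric[of n "2 * n + 1"] by (simp add: Suc_diff_le)
  have a': "(real n + 1) * A = (2 * real n + 1) * X"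
  proof -
    have "real ((n + 1) * ((2 * n + 1) choose (n + 1))) = real ((2 * n + 1) * ((2 * n) choose n))"
      using a by (rule arg_cong)
    then show ?thesis unfolding A_def X_def by (simp only: of_nat_mult of_nat_add of_nat_1 of_nat_numeral)
  qed
  have b': "(real n + 1) * Y = (real n + 1) * (2 * A)"
  proof -
    have "real ((n + 1) * ((2 * n + 2) choose (n + 1))) = real ((2 * n + 2) * ((2 * n + 1) choose (n + 1)))"
      using b c by simp
    then have "(real n + 1) * Y = (2 * real n + 2) * A"
      unfolding A_def Y_def by (simp only: of_nat_mult of_nat_add of_nat_1 of_nat_numeral)
    then show ?thesis by (simp add: algebra_simps)
  qed
  have "Y = 2 * A" using b' by (rule mult_left_cancel[THEN iffD1, rotated]) auto
  then have YX: "(real n + 1) * Y = 2 * (2 * real n + 1) * X"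
    using a' by (simp add: algebra_simps)
  have IH: "X ^ 2 * (4 * real n + 1) \<ge> 16 ^ n" using Suc.IH unfolding X_def by (simp add: add.commute)
  have key: "(2 * real n + 1) ^ 2 * (4 * real n + 5) \<ge> (2 * real n + 2) ^ 2 * (4 * real n + 1)"
    by (simp add: power2_eq_square algebra_simps)
  have "((real n + 1) * Y) ^ 2 * (4 * real n + 5) = 4 * (2 * real n + 1) ^ 2 * (4 * real n + 5) * X ^ 2"
    unfolding YX by (simp add: power2_eq_square algebra_simps)
  also have "\<dots> \<ge> 4 * (2 * real n + 2) ^ 2 * (4 * real n + 1) * X ^ 2"
    using key by (intro mult_right_mono) auto
  also have "4 * (2 * real n + 2) ^ 2 * (4 * real n + 1) * X ^ 2 = 16 * (real n + 1) ^ 2 * (X ^ 2 * (4 * real n + 1))"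
    by (simp add: power2_eq_square algebra_simps)
  also have "\<dots> \<ge> 16 * (real n + 1) ^ 2 * 16 ^ n"
    using IH by (intro mult_left_mono) auto
  finally have F: "((real n + 1) * Y) ^ 2 * (4 * real n + 5) \<ge> 16 * (real n + 1) ^ 2 * 16 ^ n" .
  have G: "((real n + 1) * Y) ^ 2 * (4 * real n + 5) = (real n + 1) ^ 2 * (Y ^ 2 * (4 * real n + 5))"
    by (simp only: power_mult_distrib mult_ac)
  have H: "16 * (real n + 1) ^ 2 * 16 ^ n = (real n + 1) ^ 2 * 16 ^ Suc n" by simp
  have "(real n + 1) ^ 2 * (Y ^ 2 * (4 * real n + 5)) \<ge> (real n + 1) ^ 2 * 16 ^ Suc n"
    using F unfolding G H .
  then have "Y ^ 2 * (4 * real n + 5) \<ge> 16 ^ Suc n"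
    by (rule mult_left_le_imp_le) auto
  moreover have "(2 * Suc n) choose Suc n = (2 * n + 2) choose (n + 1)" by simp
  ultimately show ?case unfolding Y_def by (simp add: algebra_simps)
qed

lemma central: "real (m choose ((m + 1) div 2)) ^ 2 * (2 * m + 3) \<ge> 4 ^ m"
proof (cases "even m")
  case True
  then obtain n where m: "m = 2 * n" by (auto elim: evenE)
  have T: "(m + 1) div 2 = n" unfolding m by simp
  have "4 ^ m = (16::real) ^ n" unfolding m by (simp add: power_mult)
  also have "\<dots> \<le> real ((2 * n) choose n) ^ 2 * (4 * n + 1)" by (rule central_even)
  also have "\<dots> \<le> real ((2 * n) choose n) ^ 2 * (2 * m + 3)"
    by (intro mult_left_mono) (auto simp: m)
  finally show ?thesis unfolding T m by simp
next
  case False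
  then obtain n where m: "m = 2 * n + 1" by (auto elim: oddE)
  have T: "(m + 1) div 2 = n + 1" unfolding m by simp
  define X where "X = real ((2 * n) choose n)"
  define Y where "Y = real ((2 * n + 1) choose (n + 1))"
  have a: "(n + 1) * ((2 * n + 1) choose (n + 1)) = (2 * n + 1) * ((2 * n) choose n)"
    using Suc_times_binomial_eq[of "2 * n" n] by (simp add: mult_ac)
  have YX: "(real n + 1) * Y = (2 * real n + 1) * X"
  proof -
    have "real ((n + 1) * ((2 * n + 1) choose (n + 1))) = real ((2 * n + 1) * ((2 * n) choose n))"
      using a by (rule arg_cong)
    then show ?thesis unfolding Y_def X_def by (simp only: of_nat_mult of_nat_add of_nat_1 of_nat_numeral)
  qed
  have IH: "X ^ 2 * (4 * real n + 1) \<ge> 16 ^ n" using central_even[of n] unfolding X_def by (simp add: add.commute)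
  have key: "(2 * real n + 1) ^ 2 * (4 * real n + 5) \<ge> (2 * real n + 2) ^ 2 * (4 * real n + 1)"
    by (simp add: power2_eq_square algebra_simps)
  have "((real n + 1) * Y) ^ 2 * (4 * real n + 5) = (2 * real n + 1) ^ 2 * (4 * real n + 5) * X ^ 2"
    unfolding YX by (simp add: power2_eq_square algebra_simps)
  also have "\<dots> \<ge> (2 * real n + 2) ^ 2 * (4 * real n + 1) * X ^ 2"
    using key by (intro mult_right_mono) auto
  also have "(2 * real n + 2) ^ 2 * (4 * real n + 1) * X ^ 2 = 4 * (real n + 1) ^ 2 * (X ^ 2 * (4 * real n + 1))"
    by (simp add: power2_eq_square algebra_simps)
  also have "\<dots> \<ge> 4 * (real n + 1) ^ 2 * 16 ^ n"
    using IH by (intro mult_left_mono) auto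
  finally have F: "((real n + 1) * Y) ^ 2 * (4 * real n + 5) \<ge> 4 * (real n + 1) ^ 2 * 16 ^ n" .
  have G: "((real n + 1) * Y) ^ 2 * (4 * real n + 5) = (real n + 1) ^ 2 * (Y ^ 2 * (4 * real n + 5))"
    by (simp only: power_mult_distrib mult_ac)
  have H: "4 * (real n + 1) ^ 2 * 16 ^ n = (real n + 1) ^ 2 * (4 * 16 ^ n)" by simp
  have "(real n + 1) ^ 2 * (Y ^ 2 * (4 * real n + 5)) \<ge> (real n + 1) ^ 2 * (4 * 16 ^ n)"
    using F unfolding G H .
  then have "Y ^ 2 * (4 * real n + 5) \<ge> 4 * 16 ^ n"
    by (rule mult_left_le_imp_le) auto
  moreover have "(4::real) ^ m = 4 * 16 ^ n" unfolding m by (simp add: power_mult)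
  moreover have "real (2 * m + 3) = 4 * real n + 5" unfolding m by simp
  ultimately have R: "Y ^ 2 * (2 * real m + 3) \<ge> 4 ^ m" by (simp add: add.commute)
  have eqC: "real (m choose ((m + 1) div 2)) = Y" unfolding T unfolding m Y_def by (rule refl)
  show ?thesis using R unfolding eqC by simp
qed

lemma ratio_step:
  fixes m T J k :: nat
  assumes "m \<le> 2 * T" "2 * T \<le> m + 1" "k \<le> T" "T < k + J" "0 < k"
  shows "real (m choose (k - 1)) \<ge> real (m choose k) * (1 - 4 * real J / (real m + 1))"
proof -
  have km: "k \<le> m" using assms by linarith
  have id: "real k * real (m choose k) = real (m - (k - 1)) * real (m choose (k - 1))"
    using binom_step[OF assms(5), of m] by (metis of_nat_mult)
  have mk: "real (m - (k - 1)) = real m - real k + 1" using km assms(5) by (simp add: of_nat_diff)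
  define a where "a = real m - real k + 1"
  have apos: "a > 0" using km unfolding a_def by simp
  have "2 * k \<le> m + 1" using assms by linarith
  then have "real (2 * k) \<le> real (m + 1)" by (simp only: of_nat_le_iff)
  then have a2: "2 * a \<ge> real m + 1" unfolding a_def by simp
  have "m + 1 \<le> 2 * k + 2 * J" using assms by linarith
  then have "real (m + 1) \<le> real (2 * k + 2 * J)" by (simp only: of_nat_le_iff)
  then have b: "real m + 1 - 2 * real k \<le> 2 * real J" by simp
  have J0: "real J \<ge> 0" by simp
  have "4 * real J * a \<ge> 2 * real J * (real m + 1)"
    using mult_left_mono[OF a2, of "2 * real J"] by (simp add: algebra_simps)
  moreover have "(real m + 1) * (real m + 1 - 2 * real k) \<le> (real m + 1) * (2 * real J)"
    using b by (intro mult_left_mono) auto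
  ultimately have key: "real k * (real m + 1) \<ge> a * (real m + 1 - 4 * real J)"
    unfolding a_def by (simp add: algebra_simps)
  have "real k / a \<ge> 1 - 4 * real J / (real m + 1)"
    using key apos by (simp add: field_simps)
  then have "real (m choose k) * (1 - 4 * real J / (real m + 1)) \<le> real (m choose k) * (real k / a)"
    by (intro mult_left_mono) auto
  also have "real (m choose k) * (real k / a) = real (m choose (k - 1))"
    using id apos unfolding mk a_def[symmetric] by (simp add: field_simps)
  finally show ?thesis .
qed

lemma ratio_ind:
  fixes m T J j :: nat
  assumes T: "m \<le> 2 * T" "2 * T \<le> m + 1" and J: "9 * J ^ 2 \<le> m + 1" and j: "j \<le> J"
  shows "real (m choose (T - j)) \<ge> real (m choose T) * (1 - real j * (4 * real J / (real m + 1)))"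
  using j
proof (induction j)
  case 0 then show ?case by simp
next
  case (Suc j)
  define d where "d = 4 * real J / (real m + 1)"
  have JT: "J \<le> T"
  proof (cases "J = 0")
    case False
    then have "J \<le> J ^ 2" by (simp add: power2_eq_square)
    then show ?thesis using J T False by linarith
  qed simp
  have d1: "d \<le> 1"
  proof (cases "J = 0")
    case False
    then have "4 * J \<le> 4 * J ^ 2" by (simp add: power2_eq_square)
    then have "4 * real J \<le> real m + 1" using J by linarith
    then show ?thesis unfolding d_def by simp
  qed (simp add: d_def)
  have d0: "d \<ge> 0" unfolding d_def by simp
  have IH: "real (m choose (T - j)) \<ge> real (m choose T) * (1 - real j * d)"
    using Suc by (simp add: d_def)
  have step: "real (m choose (T - j - 1)) \<ge> real (m choose (T - j)) * (1 - d)"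
    unfolding d_def by (rule ratio_step) (use T Suc.prems JT in auto)
  have "real (m choose T) * (1 - real (Suc j) * d) \<le> real (m choose T) * ((1 - real j * d) * (1 - d))"
    by (intro mult_left_mono) (auto simp: algebra_simps d0)
  also have "\<dots> = (real (m choose T) * (1 - real j * d)) * (1 - d)" by simp
  also have "\<dots> \<le> real (m choose (T - j)) * (1 - d)"
    using IH d1 by (intro mult_right_mono) auto
  also have "\<dots> \<le> real (m choose (T - Suc j))" using step by simp
  finally show ?case by (simp add: d_def)
qed

lemma ratio_half:
  fixes m T J j :: nat
  assumes T: "m \<le> 2 * T" "2 * T \<le> m + 1" and J: "9 * J ^ 2 \<le> m + 1" and j: "j \<le> J"
  shows "2 * real (m choose (T - j)) \<ge> real (m choose T)"
proof -
  have "real j * (4 * real J / (real m + 1)) \<le> real J * (4 * real J / (real m + 1))"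
    using j by (intro mult_right_mono) auto
  also have "\<dots> = 4 * (real J ^ 2) / (real m + 1)" by (simp add: power2_eq_square)
  also have "\<dots> \<le> 1 / 2"
  proof -
    have "real (9 * J ^ 2) \<le> real (m + 1)" using J by (simp only: of_nat_le_iff)
    then have "9 * real J ^ 2 \<le> real m + 1" by simp
    then show ?thesis by (simp add: field_simps)
  qed
  finally have "1 - real j * (4 * real J / (real m + 1)) \<ge> 1 / 2" by simp
  then have "real (m choose T) * (1 / 2) \<le> real (m choose T) * (1 - real j * (4 * real J / (real m + 1)))"
    by (intro mult_left_mono) auto
  also have "\<dots> \<le> real (m choose (T - j))" by (rule ratio_ind[OF T J j])
  finally show ?thesis by simp
qed



definition Dl :: "real \<Rightarrow> nat \<Rightarrow> real" where
  "Dl e0 m = (\<Sum>x\<le>m. real (m choose x) / 2 ^ m * pmf (dlap e0) (int ((m + 1) div 2) - int x))"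

lemma geo_part:
  assumes e0: "e0 > 0"
  shows "(\<Sum>j\<le>J. pmf (dlap e0) (int j)) \<ge> (1 - exp (- e0 * (real J + 1))) / 2"
proof -
  define r where "r = exp (- e0)"
  define E where "E = exp e0"
  have r0: "0 < r" "r < 1" using e0 by (auto simp: r_def)
  have E1: "E > 1" using e0 by (simp add: E_def)
  have rE: "r = 1 / E" by (simp add: r_def E_def exp_minus field_simps)
  have "(\<Sum>j\<le>J. pmf (dlap e0) (int j)) = (\<Sum>j<Suc J. dla e0 * r ^ j)"
    by (intro sum.cong) (auto simp: pmf_dlap[OF e0] r_def exp_of_nat_mult[symmetric] mult_ac lessThan_Suc_atMost)
  also have "\<dots> = dla e0 * (\<Sum>j<Suc J. r ^ j)" by (rule sum_distrib_left[symmetric])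
  also have "\<dots> = dla e0 * ((1 - r ^ Suc J) / (1 - r))"
    using r0 by (subst sum_gp_strict) simp
  also have "\<dots> = (dla e0 / (1 - r)) * (1 - r ^ Suc J)" by simp
  also have "dla e0 / (1 - r) = E / (E + 1)"
  proof -
    have "1 * 1 < E * E" using E1 by (intro mult_strict_mono) auto
    then have EE: "E * E - 1 \<noteq> 0" by simp
    show ?thesis unfolding dla_def E_def[symmetric] rE using E1 EE by (simp add: field_simps)
  qed
  also have "r ^ Suc J = exp (- e0 * (real J + 1))"
  proof -
    have "r ^ Suc J = exp (real (Suc J) * (- e0))" unfolding r_def by (rule exp_of_nat_mult[symmetric])
    also have "real (Suc J) * (- e0) = - e0 * (real J + 1)" by (simp add: algebra_simps)
    finally show ?thesis .
  qed
  finally have eq: "(\<Sum>j\<le>J. pmf (dlap e0) (int j)) = E / (E + 1) * (1 - exp (- e0 * (real J + 1)))" .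
  have h: "E / (E + 1) \<ge> 1 / 2" using E1 by (simp add: field_simps)
  have p: "1 - exp (- e0 * (real J + 1)) \<ge> 0" using e0 by simp
  show ?thesis unfolding eq using mult_right_mono[OF h p] by simp
qed

lemma one_minus_exp: fixes s :: real shows "s \<ge> 0 \<Longrightarrow> 1 - exp (- s) \<ge> s / (1 + s)"
proof -
  assume s: "s \<ge> 0"
  have "exp s \<ge> 1 + s" by (rule exp_ge_add_one_self_aux[OF s])
  then have "exp (- s) \<le> 1 / (1 + s)" using s by (simp add: exp_minus field_simps)
  then show ?thesis using s by (simp add: field_simps)
qed

lemma frac_mono: fixes a b :: real shows "0 \<le> a \<Longrightarrow> a \<le> b \<Longrightarrow> a / (1 + a) \<le> b / (1 + b)"
  by (simp add: field_simps)

lemma final_arith: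
  fixes P q s eps R :: real
  assumes P: "P \<ge> 0" and q: "q > 0" and Pq: "2 * q * P \<ge> 1" and eps: "eps > 0"
    and s: "s \<ge> eps * q / 6" and R: "R \<ge> q" "eps * R \<ge> 1"
  shows "P / 4 * (s / (1 + s)) \<ge> 1 / (64 * R)"
proof -
  define s0 where "s0 = eps * q / 6"
  have s00: "s0 \<ge> 0" using eps q by (simp add: s0_def)
  have Rpos: "R > 0" using R q by linarith
  have P1: "P \<ge> 1 / (2 * q)" using Pq q by (simp add: field_simps)
  have f: "s0 / (1 + s0) \<le> s / (1 + s)" using s00 s unfolding s0_def[symmetric] by (rule frac_mono)
  have f0: "s0 / (1 + s0) \<ge> 0" using s00 by simp
  have "1 / (2 * q) / 4 * (s0 / (1 + s0)) \<le> P / 4 * (s0 / (1 + s0))"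
    using P1 f0 by (intro mult_right_mono) auto
  also have "\<dots> \<le> P / 4 * (s / (1 + s))" using f P by (intro mult_left_mono) auto
  finally have A: "1 / (2 * q) / 4 * (s0 / (1 + s0)) \<le> P / 4 * (s / (1 + s))" .
  have B: "1 / (2 * q) / 4 * (s0 / (1 + s0)) = eps / (8 * (6 + eps * q))"
    unfolding s0_def using q eps by (simp add: field_simps)
  have C: "6 + eps * q \<le> 7 * (eps * R)"
  proof -
    have "eps * q \<le> eps * R" using R eps by (intro mult_left_mono) auto
    then show ?thesis using R by linarith
  qed
  have D: "1 / (64 * R) \<le> eps / (8 * (6 + eps * q))"
  proof -
    have pos: "0 < 6 + eps * q" using eps q by (simp add: add_pos_pos)
    have "1 / (64 * R) = eps / (64 * (eps * R))" using eps by simp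
    also have "\<dots> \<le> eps / (8 * (7 * (eps * R)))" using eps R Rpos by (intro divide_left_mono) auto
    also have "\<dots> \<le> eps / (8 * (6 + eps * q))" using C eps pos by (intro divide_left_mono) auto
    finally show ?thesis .
  qed
  show ?thesis using A B D by linarith
qed

lemma Dl_lower:
  assumes eps: "eps > 0"
  shows "Dl (eps / 2) m \<ge> 1 / (64 * sqrt (real m + 1 + 1 / eps ^ 2))"
proof -
  define e0 where "e0 = eps / 2"
  define T where "T = (m + 1) div 2"
  define q where "q = sqrt (real m + 1)"
  define J where "J = nat \<lfloor>q / 3\<rfloor>"
  define P where "P = real (m choose T) / 2 ^ m"
  define R where "R = sqrt (real m + 1 + 1 / eps ^ 2)"
  define D where "D = dlap e0"
  have e0pos: "e0 > 0" using eps by (simp add: e0_def)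
  have q1: "q \<ge> 1" unfolding q_def by simp
  have qsq: "q ^ 2 = real m + 1" unfolding q_def by simp
  have Jq: "real J \<le> q / 3" "q / 3 < real J + 1"
  proof -
    have "real J = of_int \<lfloor>q / 3\<rfloor>" unfolding J_def using q1 by simp
    then show "real J \<le> q / 3" "q / 3 < real J + 1" by linarith+
  qed
  have J9: "9 * J ^ 2 \<le> m + 1"
  proof -
    have "real J ^ 2 \<le> (q / 3) ^ 2" using Jq by (intro power_mono) auto
    then have "9 * real J ^ 2 \<le> real m + 1" using qsq by (simp add: power_divide)
    then have "real (9 * J ^ 2) \<le> real (m + 1)" by simp
    then show ?thesis by (simp only: of_nat_le_iff)
  qed
  have T1: "m \<le> 2 * T" "2 * T \<le> m + 1" unfolding T_def by linarith+
  have JT: "J \<le> T"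
  proof (cases "J = 0")
    case False
    then have "J \<le> J ^ 2" by (simp add: power2_eq_square)
    then show ?thesis using J9 T1 False by linarith
  qed simp
  have Tm: "T \<le> m" unfolding T_def by linarith
  define f where "f x = real (m choose x) / 2 ^ m * pmf D (int T - int x)" for x
  have f0: "f x \<ge> 0" for x unfolding f_def by simp
  have inj: "inj_on (\<lambda>j. T - j) {..J}" using JT by (auto simp: inj_on_def)
  have "(\<Sum>j\<le>J. real (m choose (T - j)) / 2 ^ m * pmf D (int j)) = (\<Sum>j\<le>J. f (T - j))"
    using JT by (intro sum.cong) (auto simp: f_def of_nat_diff)
  also have "\<dots> = (\<Sum>x\<in>(\<lambda>j. T - j) ` {..J}. f x)" by (simp add: sum.reindex[OF inj])
  also have "\<dots> \<le> (\<Sum>x\<le>m. f x)" using Tm by (intro sum_mono2) (auto simp: f0)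
  also have "\<dots> = Dl e0 m" unfolding Dl_def f_def D_def T_def by simp
  finally have S1: "(\<Sum>j\<le>J. real (m choose (T - j)) / 2 ^ m * pmf D (int j)) \<le> Dl e0 m" .
  have "(\<Sum>j\<le>J. P / 2 * pmf D (int j)) \<le> (\<Sum>j\<le>J. real (m choose (T - j)) / 2 ^ m * pmf D (int j))"
  proof (intro sum_mono mult_right_mono)
    fix j assume "j \<in> {..J}"
    then have "2 * real (m choose (T - j)) \<ge> real (m choose T)" using ratio_half[OF T1 J9] by auto
    then show "P / 2 \<le> real (m choose (T - j)) / 2 ^ m" unfolding P_def by (simp add: field_simps)
  qed simp
  also note S1
  finally have S2: "P / 2 * (\<Sum>j\<le>J. pmf D (int j)) \<le> Dl e0 m" by (simp add: sum_distrib_left)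
  define s where "s = e0 * (real J + 1)"
  have s0: "s \<ge> 0" unfolding s_def using e0pos by simp
  have "(\<Sum>j\<le>J. pmf D (int j)) \<ge> (1 - exp (- s)) / 2"
    using geo_part[OF e0pos, of J] unfolding D_def s_def by simp
  moreover have "(1 - exp (- s)) / 2 \<ge> (s / (1 + s)) / 2" using one_minus_exp[OF s0] by (intro divide_right_mono) auto
  ultimately have G: "(\<Sum>j\<le>J. pmf D (int j)) \<ge> (s / (1 + s)) / 2" by linarith
  have P0: "P \<ge> 0" unfolding P_def by simp
  have S3: "P / 4 * (s / (1 + s)) \<le> Dl e0 m"
  proof -
    have h: "P / 2 * ((s / (1 + s)) / 2) \<le> P / 2 * (\<Sum>j\<le>J. pmf D (int j))"
      using G P0 by (intro mult_left_mono) auto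
    have eq: "P / 4 * (s / (1 + s)) = P / 2 * ((s / (1 + s)) / 2)" by simp
    show ?thesis unfolding eq using order.trans[OF h S2] .
  qed
  have Pq: "2 * q * P \<ge> 1"
  proof -
    have c: "real (m choose T) ^ 2 * (2 * m + 3) \<ge> 4 ^ m" using central[of m] unfolding T_def .
    have "P ^ 2 * (2 * real m + 3) \<ge> 1"
    proof -
      have p4: "(4::real) ^ m = 2 ^ m * 2 ^ m"
      proof -
        have "(4::real) ^ m = (2 * 2) ^ m" by simp
        also have "\<dots> = 2 ^ m * 2 ^ m" by (rule power_mult_distrib)
        finally show ?thesis .
      qed
      have "P ^ 2 * (2 * real m + 3) = real (m choose T) ^ 2 * (2 * m + 3) / 4 ^ m"
        unfolding P_def p4 by (simp add: power2_eq_square)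
      moreover have "real (m choose T) ^ 2 * (2 * m + 3) / 4 ^ m \<ge> 4 ^ m / 4 ^ m"
        using c by (intro divide_right_mono) auto
      ultimately show ?thesis by simp
    qed
    moreover have "2 * real m + 3 \<le> 4 * q ^ 2" using qsq by simp
    ultimately have "P ^ 2 * (4 * q ^ 2) \<ge> 1"
      using mult_left_mono[of "2 * real m + 3" "4 * q ^ 2" "P ^ 2"] by simp
    moreover have "(2 * q * P) ^ 2 = P ^ 2 * (4 * q ^ 2)" by (simp add: power_mult_distrib)
    ultimately have "(2 * q * P) ^ 2 \<ge> 1 ^ 2" by simp
    moreover have "0 \<le> 2 * q * P" using P0 q1 by simp
    ultimately show ?thesis by (rule power2_le_imp_le)
  qed
  have sq: "s \<ge> eps * q / 6"
  proof -
    have "(eps / 2) * (q / 3) \<le> (eps / 2) * (real J + 1)" using Jq eps by (intro mult_left_mono) auto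
    then show ?thesis unfolding s_def e0_def by simp
  qed
  have Rq: "R \<ge> q" unfolding R_def q_def by (intro real_sqrt_le_mono) auto
  have Re: "eps * R \<ge> 1"
  proof -
    have "sqrt (1 / eps ^ 2) \<le> R" unfolding R_def by (intro real_sqrt_le_mono) auto
    moreover have "sqrt (1 / eps ^ 2) = 1 / eps" using eps by (simp add: real_sqrt_divide)
    ultimately have "1 / eps \<le> R" by simp
    then have "eps * (1 / eps) \<le> eps * R" using eps by (intro mult_left_mono) auto
    then show ?thesis using eps by simp
  qed
  have "1 / (64 * R) \<le> P / 4 * (s / (1 + s))"
    by (rule final_arith[OF P0 _ Pq eps sq Rq Re]) (use q1 in simp)
  then show ?thesis using S3 unfolding R_def e0_def by simp
qed



lemma integrable_bounded_pmf:
  fixes f :: "'a \<Rightarrow> real"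
  assumes "\<And>x. \<bar>f x\<bar> \<le> B"
  shows "integrable (measure_pmf p) f"
  by (rule measure_pmf.integrable_const_bound[where B = B]) (use assms in auto)

lemma prob_bind_pmf: "measure_pmf.prob (bind_pmf M N) X = (\<integral>x. measure_pmf.prob (N x) X \<partial>M)"
proof -
  have int: "integrable (measure_pmf M) (\<lambda>x. measure_pmf.prob (N x) X)"
    by (rule integrable_bounded_pmf[where B = 1]) auto
  have "ennreal (measure_pmf.prob (bind_pmf M N) X) = emeasure (measure_pmf (bind_pmf M N)) X"
    by (simp add: measure_pmf.emeasure_eq_measure)
  also have "\<dots> = (\<integral>\<^sup>+x. emeasure (measure_pmf (N x)) X \<partial>M)" by simp
  also have "\<dots> = (\<integral>\<^sup>+x. ennreal (measure_pmf.prob (N x) X) \<partial>M)"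
    by (simp add: measure_pmf.emeasure_eq_measure)
  also have "\<dots> = ennreal (\<integral>x. measure_pmf.prob (N x) X \<partial>M)"
    by (rule nn_integral_eq_integral[OF int]) auto
  finally show ?thesis by (simp add: integral_nonneg_AE)
qed

lemma integral_bind_pmf_b:
  fixes f :: "'a \<Rightarrow> real"
  assumes "\<And>x. \<bar>f x\<bar> \<le> B"
  shows "integral\<^sup>L (measure_pmf (bind_pmf M N)) f = (\<integral>x. integral\<^sup>L (measure_pmf (N x)) f \<partial>M)"
  using measurable_measure_pmf[of N] assms
  unfolding measure_pmf_bind
  by (intro integral_bind[where K = "count_space UNIV" and B = B and B' = 1]) (auto intro: measure_pmf.finite_measure_axioms)

lemma integral_coin: "(\<integral>x. f x \<partial>measure_pmf coin) = (f True + f False) / (2::real)"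
  unfolding coin_def by (subst integral_pmf_of_set) (auto simp: UNIV_bool)

definition Pz :: "int pmf \<Rightarrow> int \<Rightarrow> real" where "Pz D t = measure_pmf.prob D {z. z \<le> t}"

lemma integral_thr:
  "(\<integral>z. f (z \<le> t) \<partial>measure_pmf D) = Pz D t * f True + (1 - Pz D t) * (f False :: real)"
proof -
  have eq: "f (z \<le> t) = f False + (f True - f False) * indicator {z. z \<le> t} z" for z
    by (auto simp: indicator_def)
  have "(\<integral>z. f (z \<le> t) \<partial>measure_pmf D) = (\<integral>z. f False + (f True - f False) * indicator {z. z \<le> t} z \<partial>measure_pmf D)"
    unfolding eq ..
  also have "\<dots> = f False + (f True - f False) * Pz D t"
  proof -
    have i1: "integrable (measure_pmf D) (\<lambda>z. indicator {z. z \<le> t} z :: real)"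
      by (rule integrable_bounded_pmf[where B = 1]) (auto simp: indicator_def)
    have "(\<integral>z. f False + (f True - f False) * indicator {z. z \<le> t} z \<partial>measure_pmf D)
          = (\<integral>z. f False \<partial>measure_pmf D) + (\<integral>z. (f True - f False) * indicator {z. z \<le> t} z \<partial>measure_pmf D)"
      using i1 by (intro Bochner_Integration.integral_add) auto
    also have "(\<integral>z. (f True - f False) * indicator {z. z \<le> t} z \<partial>measure_pmf D) = (f True - f False) * (\<integral>z. indicator {z. z \<le> t} z \<partial>measure_pmf D)"
      by (rule integral_mult_right_zero)
    also have "(\<integral>z. indicator {z. z \<le> t} z \<partial>measure_pmf D) = Pz D t"
      unfolding Pz_def by simp
    finally show ?thesis by simp
  qed
  finally show ?thesis by (simp add: algebra_simps)
qed

lemma integral_pair_prod: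
  fixes f g :: "_ \<Rightarrow> real"
  assumes "\<And>x. \<bar>f x\<bar> \<le> B1" "\<And>y. \<bar>g y\<bar> \<le> B2"
  shows "(\<integral>z. f (fst z) * g (snd z) \<partial>measure_pmf (pair_pmf p q)) = (\<integral>x. f x \<partial>measure_pmf p) * (\<integral>y. g y \<partial>measure_pmf q)"
proof -
  have b: "\<bar>f (fst z) * g (snd z)\<bar> \<le> B1 * B2" for z
    unfolding abs_mult using assms by (intro mult_mono) (auto intro: order.trans[OF abs_ge_zero])
  have "(\<integral>z. f (fst z) * g (snd z) \<partial>measure_pmf (pair_pmf p q)) = (\<integral>x. (\<integral>z. f (fst z) * g (snd z) \<partial>measure_pmf (q \<bind> (\<lambda>y. return_pmf (x, y)))) \<partial>p)"
    unfolding pair_pmf_def by (rule integral_bind_pmf_b[OF b])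
  also have "\<dots> = (\<integral>x. (\<integral>y. f x * g y \<partial>q) \<partial>p)"
  proof (intro Bochner_Integration.integral_cong refl)
    fix x
    show "(\<integral>z. f (fst z) * g (snd z) \<partial>measure_pmf (q \<bind> (\<lambda>y. return_pmf (x, y)))) = (\<integral>y. f x * g y \<partial>q)"
      by (subst integral_bind_pmf_b[OF b]) (simp add: integral_return)
  qed
  also have "\<dots> = (\<integral>x. f x * (\<integral>y. g y \<partial>q) \<partial>p)" by simp
  also have "\<dots> = (\<integral>x. f x \<partial>p) * (\<integral>y. g y \<partial>q)" by simp
  finally show ?thesis .
qed



lemma outer_thr:
  fixes g :: "bool \<Rightarrow> real"
  shows "(\<integral>zu. g (if zu \<le> s then a1 else a2) \<partial>measure_pmf D) = Pz D s * g a1 + (1 - Pz D s) * g a2"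
  using integral_thr[where f = "\<lambda>k. g (if k then a1 else a2)" and t = s and D = D] by simp

lemma inner_calc:
  fixes D :: "int pmf" and tu tv :: "bool \<Rightarrow> bool \<Rightarrow> int"
  shows "(\<integral>a1. \<integral>a2. \<integral>b1. \<integral>b2. \<integral>zu. \<integral>zv.
            of_bool ((if zu \<le> tu a1 b1 then a1 else a2) \<noteq> (if zv \<le> tv a1 b1 then b1 else b2))
          \<partial>measure_pmf D \<partial>measure_pmf D \<partial>measure_pmf coin \<partial>measure_pmf coin \<partial>measure_pmf coin \<partial>measure_pmf coin)
         = 1 / 2 + 1 / 8 * (Pz D (tu True False) * Pz D (tv True False) + Pz D (tu False True) * Pz D (tv False True)
                          - Pz D (tu True True) * Pz D (tv True True) - Pz D (tu False False) * Pz D (tv False False))"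
proof -
  have inner: "(\<integral>zv. of_bool (x \<noteq> (if zv \<le> t then b1 else b2)) \<partial>measure_pmf D)
       = Pz D t * of_bool (x \<noteq> b1) + (1 - Pz D t) * of_bool (x \<noteq> b2)" for x t b1 b2
    using integral_thr[where f = "\<lambda>k. of_bool (x \<noteq> (if k then b1 else b2))" and t = t and D = D] by simp
  have zz: "(\<integral>zu. \<integral>zv. of_bool ((if zu \<le> s then a1 else a2) \<noteq> (if zv \<le> t then b1 else b2)) \<partial>measure_pmf D \<partial>measure_pmf D)
      = Pz D s * (Pz D t * of_bool (a1 \<noteq> b1) + (1 - Pz D t) * of_bool (a1 \<noteq> b2))
        + (1 - Pz D s) * (Pz D t * of_bool (a2 \<noteq> b1) + (1 - Pz D t) * of_bool (a2 \<noteq> b2))" for s t :: int and a1 a2 b1 b2 :: bool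
    unfolding inner
    by (rule outer_thr[where g = "\<lambda>x. Pz D t * of_bool (x \<noteq> b1) + (1 - Pz D t) * of_bool (x \<noteq> b2)"])
  show ?thesis
    unfolding zz by (simp add: integral_coin) (simp add: field_simps)
qed



definition Nb :: "nat set set \<Rightarrow> nat \<Rightarrow> nat \<Rightarrow> nat set" where
  "Nb E u v = {w. {w, u} \<in> E} - {v}"

definition Kc :: "nat set set \<Rightarrow> nat \<Rightarrow> nat \<Rightarrow> (nat \<Rightarrow> bool \<times> bool \<times> int) \<Rightarrow> bool \<Rightarrow> nat" where
  "Kc E u v g a = card {w \<in> Nb E u v. fst (g w) = a}"

definition TT :: "nat set set \<Rightarrow> nat \<Rightarrow> int" where
  "TT E u = \<lceil>(real (degree E u) - 1) / 2\<rceil>"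

definition tq :: "nat set set \<Rightarrow> nat \<Rightarrow> nat \<Rightarrow> (nat \<Rightarrow> bool \<times> bool \<times> int) \<Rightarrow> bool \<Rightarrow> bool \<Rightarrow> int" where
  "tq E u v g a b = TT E u - (if a = b then 1 else 0) - int (Kc E u v g a)"

definition OUT :: "nat \<Rightarrow> nat set set \<Rightarrow> (nat \<Rightarrow> bool \<times> bool \<times> int) \<Rightarrow> nat set" where
  "OUT n E r = alg_output n E (\<lambda>v. fst (r v)) (\<lambda>v. fst (snd (r v))) (\<lambda>v. snd (snd (r v)))"

lemma thr_at:
  assumes sg: "simple_graph n E" and uv: "{u, v} \<in> E" and c1u: "c1 u = a" and c1v: "c1 v = b"
    and c1w: "\<And>w. w \<noteq> u \<Longrightarrow> w \<noteq> v \<Longrightarrow> c1 w = fst (g w)"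
  shows "thr E c1 u = tq E u v g a b"
proof -
  have uv': "u \<noteq> v" using sg_mem[OF sg uv] by simp
  define S where "S = {w \<in> Nb E u v. fst (g w) = a}"
  have fS: "finite S" unfolding S_def Nb_def
    by (rule finite_subset[OF _ nb_finite[OF sg, of u "\<lambda>_. True"]]) auto
  have vS: "v \<notin> S" unfolding S_def Nb_def by auto
  have eq: "{w. {w, u} \<in> E \<and> c1 w = c1 u} = (if b = a then insert v S else S)"
  proof (intro set_eqI iffI)
    fix w assume w: "w \<in> {w. {w, u} \<in> E \<and> c1 w = c1 u}"
    then have wu: "w \<noteq> u" using sg_mem[OF sg, of w u] by auto
    show "w \<in> (if b = a then insert v S else S)"
    proof (cases "w = v")
      case True then show ?thesis using w c1u c1v by auto
    next
      case False then show ?thesis using w wu c1u c1w[OF wu False] by (auto simp: S_def Nb_def)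
    qed
  next
    fix w assume w: "w \<in> (if b = a then insert v S else S)"
    show "w \<in> {w. {w, u} \<in> E \<and> c1 w = c1 u}"
    proof (cases "w = v")
      case True then show ?thesis using w vS uv c1u c1v by (auto simp: insert_commute split: if_splits)
    next
      case False
      then have "w \<in> S" using w by (auto split: if_splits)
      then have "{w, u} \<in> E" "fst (g w) = a" "w \<noteq> v" unfolding S_def Nb_def by auto
      moreover have "w \<noteq> u" using sg_mem[OF sg \<open>{w, u} \<in> E\<close>] by simp
      ultimately show ?thesis using c1u c1w by auto
    qed
  qed
  have card: "int (card {w. {w, u} \<in> E \<and> c1 w = c1 u}) = (if a = b then 1 else 0) + int (Kc E u v g a)"
    unfolding eq Kc_def S_def[symmetric] using fS vS by auto
  show ?thesis unfolding thr_def tq_def TT_def card by simp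
qed

lemma cut_char:
  assumes sg: "simple_graph n E" and uv: "{u, v} \<in> E"
  shows "indicator {r. OUT n E r \<in> {S. (u \<in> S) \<noteq> (v \<in> S)}} ((g(v := (b1, b2, zv)))(u := (a1, a2, zu)))
       = (of_bool ((if zu \<le> tq E u v g a1 b1 then a1 else a2) \<noteq> (if zv \<le> tq E v u g b1 a1 then b1 else b2)) :: real)"
proof -
  have un: "u < n" "v < n" "u \<noteq> v" using sg_mem[OF sg uv] by auto
  define r where "r = (g(v := (b1, b2, zv)))(u := (a1, a2, zu))"
  define c1 where "c1 = (\<lambda>w. fst (r w))"
  have vu: "{v, u} \<in> E" using uv by (simp add: insert_commute)
  have tu: "thr E c1 u = tq E u v g a1 b1"
    by (rule thr_at[OF sg uv]) (use un in \<open>auto simp: c1_def r_def\<close>)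
  have tv: "thr E c1 v = tq E v u g b1 a1"
    by (rule thr_at[OF sg vu]) (use un in \<open>auto simp: c1_def r_def\<close>)
  have ru: "r u = (a1, a2, zu)" "r v = (b1, b2, zv)" "c1 u = a1" "c1 v = b1"
    using un by (auto simp: r_def c1_def)
  have O: "OUT n E r = {w. w < n \<and> (if snd (snd (r w)) \<le> thr E c1 w then c1 w else fst (snd (r w)))}"
    unfolding OUT_def alg_output_thr c1_def by simp
  have "u \<in> OUT n E r \<longleftrightarrow> (if snd (snd (r u)) \<le> thr E c1 u then c1 u else fst (snd (r u)))"
    unfolding O using un by simp
  also have "\<dots> \<longleftrightarrow> (if zu \<le> tq E u v g a1 b1 then a1 else a2)" unfolding tu ru by simp
  finally have 1: "u \<in> OUT n E r \<longleftrightarrow> (if zu \<le> tq E u v g a1 b1 then a1 else a2)" .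
  have "v \<in> OUT n E r \<longleftrightarrow> (if snd (snd (r v)) \<le> thr E c1 v then c1 v else fst (snd (r v)))"
    unfolding O using un by simp
  also have "\<dots> \<longleftrightarrow> (if zv \<le> tq E v u g b1 a1 then b1 else b2)" unfolding tv ru by simp
  finally have 2: "v \<in> OUT n E r \<longleftrightarrow> (if zv \<le> tq E v u g b1 a1 then b1 else b2)" .
  show ?thesis unfolding r_def[symmetric] using 1 2 by (simp add: indicator_def)
qed

lemma Pi_split:
  assumes "finite R" "u \<notin> R" "v \<notin> R" "u \<noteq> v"
  shows "Pi_pmf (insert u (insert v R)) d (\<lambda>_. Q) =
         Pi_pmf R d (\<lambda>_. Q) \<bind> (\<lambda>g. Q \<bind> (\<lambda>yu. Q \<bind> (\<lambda>yv. return_pmf ((g(v := yv))(u := yu)))))"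
proof -
  have "Pi_pmf (insert u (insert v R)) d (\<lambda>_. Q) = Q \<bind> (\<lambda>yu. Pi_pmf (insert v R) d (\<lambda>_. Q) \<bind> (\<lambda>f. return_pmf (f(u := yu))))"
    using assms by (subst Pi_pmf_insert') auto
  also have "\<dots> = Q \<bind> (\<lambda>yu. Q \<bind> (\<lambda>yv. Pi_pmf R d (\<lambda>_. Q) \<bind> (\<lambda>g. return_pmf ((g(v := yv))(u := yu)))))"
    using assms by (subst Pi_pmf_insert') (auto simp: bind_assoc_pmf bind_return_pmf)
  also have "\<dots> = Pi_pmf R d (\<lambda>_. Q) \<bind> (\<lambda>g. Q \<bind> (\<lambda>yu. Q \<bind> (\<lambda>yv. return_pmf ((g(v := yv))(u := yu)))))"
    by (simp add: bind_commute_pmf[of Q "Pi_pmf R d (\<lambda>_. Q)"])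
  finally show ?thesis .
qed

lemma bind_Q: "pair_pmf coin (pair_pmf coin D) \<bind> F = coin \<bind> (\<lambda>a1. coin \<bind> (\<lambda>a2. D \<bind> (\<lambda>z. F (a1, a2, z))))"
  by (simp add: pair_pmf_def bind_assoc_pmf bind_return_pmf)

lemma prob_cut_inner:
  fixes eps :: real
  assumes sg: "simple_graph n E" and uv: "{u, v} \<in> E"
  defines "D \<equiv> dlap (eps / 2)"
  shows "measure_pmf.prob (alg eps n E) {S. (u \<in> S) \<noteq> (v \<in> S)} =
    (\<integral>g. 1 / 2 + 1 / 8 * (Pz D (tq E u v g True False) * Pz D (tq E v u g False True)
                        + Pz D (tq E u v g False True) * Pz D (tq E v u g True False)
                        - Pz D (tq E u v g True True) * Pz D (tq E v u g True True)
                        - Pz D (tq E u v g False False) * Pz D (tq E v u g False False))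
      \<partial>measure_pmf (Pi_pmf ({..<n} - {u, v}) (False, False, 0) (\<lambda>_. pair_pmf coin (pair_pmf coin D))))"
proof -
  define Q where "Q = pair_pmf coin (pair_pmf coin D)"
  define R where "R = {..<n} - {u, v}"
  define G where "G = Pi_pmf R (False, False, 0) (\<lambda>_. Q)"
  define X where "X = {r. OUT n E r \<in> {S. (u \<in> S) \<noteq> (v \<in> S)}}"
  have un: "u < n" "v < n" "u \<noteq> v" using sg_mem[OF sg uv] by auto
  have A: "{..<n} = insert u (insert v R)" using un by (auto simp: R_def)
  have "alg eps n E = map_pmf (OUT n E) (Pi_pmf {..<n} (False, False, 0) (\<lambda>_. Q))"
    unfolding alg_def OUT_def Q_def D_def by (simp add: comp_def)
  then have "measure_pmf.prob (alg eps n E) {S. (u \<in> S) \<noteq> (v \<in> S)} = measure_pmf.prob (Pi_pmf {..<n} (False, False, 0) (\<lambda>_. Q)) X"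
    by (simp add: X_def vimage_def)
  also have "Pi_pmf {..<n} (False, False, 0) (\<lambda>_. Q) = G \<bind> (\<lambda>g. Q \<bind> (\<lambda>yu. Q \<bind> (\<lambda>yv. return_pmf ((g(v := yv))(u := yu)))))"
    unfolding A G_def by (rule Pi_split) (auto simp: R_def un)
  also have "measure_pmf.prob \<dots> X = (\<integral>g. measure_pmf.prob (Q \<bind> (\<lambda>yu. Q \<bind> (\<lambda>yv. return_pmf ((g(v := yv))(u := yu))))) X \<partial>G)"
    by (rule prob_bind_pmf)
  also have "\<dots> = (\<integral>g. 1 / 2 + 1 / 8 * (Pz D (tq E u v g True False) * Pz D (tq E v u g False True)
                        + Pz D (tq E u v g False True) * Pz D (tq E v u g True False)
                        - Pz D (tq E u v g True True) * Pz D (tq E v u g True True)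
                        - Pz D (tq E u v g False False) * Pz D (tq E v u g False False)) \<partial>G)"
  proof (intro Bochner_Integration.integral_cong refl)
    fix g
    have "measure_pmf.prob (Q \<bind> (\<lambda>yu. Q \<bind> (\<lambda>yv. return_pmf ((g(v := yv))(u := yu))))) X
      = (\<integral>a1. \<integral>a2. \<integral>b1. \<integral>b2. \<integral>zu. \<integral>zv.
            indicator X ((g(v := (b1, b2, zv)))(u := (a1, a2, zu)))
          \<partial>measure_pmf D \<partial>measure_pmf D \<partial>measure_pmf coin \<partial>measure_pmf coin \<partial>measure_pmf coin \<partial>measure_pmf coin)"
      unfolding Q_def
      by (simp only: bind_Q bind_commute_pmf[of D coin] prob_bind_pmf measure_return_pmf)
    also have "\<dots> = (\<integral>a1. \<integral>a2. \<integral>b1. \<integral>b2. \<integral>zu. \<integral>zv.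
            of_bool ((if zu \<le> tq E u v g a1 b1 then a1 else a2) \<noteq> (if zv \<le> tq E v u g b1 a1 then b1 else b2))
          \<partial>measure_pmf D \<partial>measure_pmf D \<partial>measure_pmf coin \<partial>measure_pmf coin \<partial>measure_pmf coin \<partial>measure_pmf coin)"
      unfolding X_def cut_char[OF sg uv] ..
    also have "\<dots> = 1 / 2 + 1 / 8 * (Pz D (tq E u v g True False) * Pz D (tq E v u g False True)
                        + Pz D (tq E u v g False True) * Pz D (tq E v u g True False)
                        - Pz D (tq E u v g True True) * Pz D (tq E v u g True True)
                        - Pz D (tq E u v g False False) * Pz D (tq E v u g False False))"
      by (rule inner_calc[where tu = "\<lambda>a b. tq E u v g a b" and tv = "\<lambda>a b. tq E v u g b a"])
    finally show "measure_pmf.prob (Q \<bind> (\<lambda>yu. Q \<bind> (\<lambda>yv. return_pmf ((g(v := yv))(u := yu))))) X = \<dots>" .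
  qed
  finally show ?thesis unfolding G_def Q_def R_def .
qed



lemma map_coin_eq: "map_pmf (\<lambda>x. x = c) coin = coin"
proof -
  have "bij_betw (\<lambda>x. x = c) (UNIV :: bool set) UNIV"
    by (cases c) (auto simp: bij_betw_def inj_on_def image_def)
  then show ?thesis unfolding coin_def by (intro map_pmf_of_set_bij_betw) auto
qed

lemma map_fst_coin: "map_pmf (\<lambda>y. fst y = c) (pair_pmf coin Y) = coin"
proof -
  have "map_pmf (\<lambda>y. fst y = c) (pair_pmf coin Y) = map_pmf (\<lambda>x. x = c) (map_pmf fst (pair_pmf coin Y))"
    by (simp add: map_pmf_comp)
  also have "\<dots> = coin" by (simp add: map_fst_pair_pmf map_coin_eq)
  finally show ?thesis .
qed

lemma binom_expect:
  fixes h :: "nat \<Rightarrow> real"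
  assumes "finite N"
  shows "(\<integral>f. h (card {w \<in> N. f w}) \<partial>measure_pmf (Pi_pmf N dd (\<lambda>_. coin)))
         = (\<Sum>x\<le>card N. real (card N choose x) / 2 ^ card N * h x)"
proof -
  have "binomial_pmf (card N) (1/2) = map_pmf (\<lambda>f. card {x \<in> N. f x}) (Pi_pmf N dd (\<lambda>_. bernoulli_pmf (1/2)))"
    by (rule binomial_pmf_altdef') (use assms in auto)
  then have "(\<integral>f. h (card {w \<in> N. f w}) \<partial>measure_pmf (Pi_pmf N dd (\<lambda>_. coin))) = (\<integral>x. h x \<partial>measure_pmf (binomial_pmf (card N) (1/2)))"
    by (simp add: coin_def bernoulli_pmf_half_conv_pmf_of_set)
  also have "\<dots> = (\<Sum>x\<le>card N. h x * pmf (binomial_pmf (card N) (1/2)) x)"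
    by (rule integral_measure_pmf_real) auto
  also have "\<dots> = (\<Sum>x\<le>card N. real (card N choose x) / 2 ^ card N * h x)"
  proof (intro sum.cong refl)
    fix x assume "x \<in> {..card N}"
    then have "(1 / 2 :: real) ^ x * (1 / 2) ^ (card N - x) = 1 / 2 ^ card N"
      by (simp add: power_add[symmetric] power_divide)
    then show "h x * pmf (binomial_pmf (card N) (1/2)) x = real (card N choose x) / 2 ^ card N * h x"
      by (simp add: mult_ac)
  qed
  finally show ?thesis .
qed

lemma indep_counts:
  fixes h1 h2 :: "nat \<Rightarrow> real" and d :: "bool \<times> 'b" and R :: "'a set"
  assumes fin: "finite R" and sub: "N1 \<subseteq> R" "N2 \<subseteq> R" and disj: "N1 \<inter> N2 = {}"
    and bd1: "\<And>x. \<bar>h1 x\<bar> \<le> B1" and bd2: "\<And>x. \<bar>h2 x\<bar> \<le> B2"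
  shows "(\<integral>g. h1 (card {w \<in> N1. fst (g w) = a}) * h2 (card {w \<in> N2. fst (g w) = b})
            \<partial>measure_pmf (Pi_pmf R d (\<lambda>_. pair_pmf coin Y)))
         = (\<Sum>x\<le>card N1. real (card N1 choose x) / 2 ^ card N1 * h1 x) *
           (\<Sum>y\<le>card N2. real (card N2 choose y) / 2 ^ card N2 * h2 y)"
proof -
  have f1: "finite N1" "finite N2" using fin sub finite_subset by auto
  define I where "I f = h1 (card {w \<in> N1. f w}) * h2 (card {w \<in> N2. f w})" for f :: "'a \<Rightarrow> bool"
  define F where "F g = (\<lambda>w. if w \<in> R then fst (g w) = (if w \<in> N1 then a else b) else False)" for g :: "'a \<Rightarrow> bool \<times> 'b"
  have IF: "h1 (card {w \<in> N1. fst (g w) = a}) * h2 (card {w \<in> N2. fst (g w) = b}) = I (F g)" for g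
  proof -
    have "{w \<in> N1. fst (g w) = a} = {w \<in> N1. F g w}" using sub by (auto simp: F_def)
    moreover have "{w \<in> N2. fst (g w) = b} = {w \<in> N2. F g w}" using sub disj by (auto simp: F_def)
    ultimately show ?thesis by (simp add: I_def)
  qed
  have mapF: "map_pmf F (Pi_pmf R d (\<lambda>_. pair_pmf coin Y)) = Pi_pmf R False (\<lambda>_. coin)"
  proof -
    have "Pi_pmf R False (\<lambda>w. map_pmf (\<lambda>y. fst y = (if w \<in> N1 then a else b)) (pair_pmf coin Y))
          = map_pmf (\<lambda>h x. if x \<in> R then fst (h x) = (if x \<in> N1 then a else b) else False) (Pi_pmf R d (\<lambda>_. pair_pmf coin Y))"
      by (rule Pi_pmf_map_dep[OF fin])
    moreover have "Pi_pmf R False (\<lambda>w. map_pmf (\<lambda>y. fst y = (if w \<in> N1 then a else b)) (pair_pmf coin Y)) = Pi_pmf R False (\<lambda>_. coin)"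
      by (simp only: map_fst_coin)
    ultimately show ?thesis unfolding F_def[abs_def] by simp
  qed
  have Ib: "\<bar>I f\<bar> \<le> B1 * B2" for f
    unfolding I_def abs_mult using bd1 bd2 by (intro mult_mono) (auto intro: order.trans[OF abs_ge_zero])
  have "(\<integral>g. h1 (card {w \<in> N1. fst (g w) = a}) * h2 (card {w \<in> N2. fst (g w) = b}) \<partial>measure_pmf (Pi_pmf R d (\<lambda>_. pair_pmf coin Y)))
        = (\<integral>g. I (F g) \<partial>measure_pmf (Pi_pmf R d (\<lambda>_. pair_pmf coin Y)))" unfolding IF ..
  also have "\<dots> = (\<integral>f. I f \<partial>measure_pmf (Pi_pmf R False (\<lambda>_. coin)))"
    unfolding mapF[symmetric] by simp
  also have "\<dots> = (\<integral>f. I f \<partial>measure_pmf (Pi_pmf (N1 \<union> N2) False (\<lambda>_. coin)))"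
  proof -
    have "Pi_pmf (N1 \<union> N2) False (\<lambda>_. coin) = map_pmf (\<lambda>f x. if x \<in> N1 \<union> N2 then f x else False) (Pi_pmf R False (\<lambda>_. coin))"
      by (rule Pi_pmf_subset) (use fin sub in auto)
    moreover have "I (\<lambda>x. if x \<in> N1 \<union> N2 then f x else False) = I f" for f
      unfolding I_def by (intro arg_cong2[where f = "\<lambda>x y. h1 x * h2 y"] arg_cong[where f = card]) auto
    ultimately show ?thesis by simp
  qed
  also have "\<dots> = (\<integral>z. h1 (card {w \<in> N1. fst z w}) * h2 (card {w \<in> N2. snd z w})
                     \<partial>measure_pmf (pair_pmf (Pi_pmf N1 False (\<lambda>_. coin)) (Pi_pmf N2 False (\<lambda>_. coin))))"
  proof -
    have "Pi_pmf (N1 \<union> N2) False (\<lambda>_. coin) = map_pmf (\<lambda>(f, g) x. if x \<in> N1 then f x else g x)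
             (pair_pmf (Pi_pmf N1 False (\<lambda>_. coin)) (Pi_pmf N2 False (\<lambda>_. coin)))"
      by (rule Pi_pmf_union) (use f1 disj in auto)
    moreover have "I ((\<lambda>(f, g) x. if x \<in> N1 then f x else g x) z) = h1 (card {w \<in> N1. fst z w}) * h2 (card {w \<in> N2. snd z w})" for z
    proof -
      obtain f g where z: "z = (f, g)" by (cases z)
      have "{w \<in> N2. (if w \<in> N1 then f w else g w)} = {w \<in> N2. g w}" using disj by auto
      moreover have "{w \<in> N1. (if w \<in> N1 then f w else g w)} = {w \<in> N1. f w}" by auto
      ultimately show ?thesis unfolding I_def z by (simp only: case_prod_conv fst_conv snd_conv)
    qed
    ultimately show ?thesis by simp
  qed
  also have "\<dots> = (\<integral>f. h1 (card {w \<in> N1. f w}) \<partial>measure_pmf (Pi_pmf N1 False (\<lambda>_. coin))) *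
                   (\<integral>g. h2 (card {w \<in> N2. g w}) \<partial>measure_pmf (Pi_pmf N2 False (\<lambda>_. coin)))"
    by (rule integral_pair_prod) (rule bd1, rule bd2)
  also have "\<dots> = (\<Sum>x\<le>card N1. real (card N1 choose x) / 2 ^ card N1 * h1 x) *
           (\<Sum>y\<le>card N2. real (card N2 choose y) / 2 ^ card N2 * h2 y)"
    using f1 by (simp add: binom_expect)
  finally show ?thesis .
qed



lemma Pz_nonneg: "Pz D t \<ge> 0" unfolding Pz_def by simp
lemma Pz_le1: "Pz D t \<le> 1" unfolding Pz_def by simp
lemma Pz_mono: "s \<le> t \<Longrightarrow> Pz D s \<le> Pz D t"
  unfolding Pz_def by (intro measure_pmf.finite_measure_mono) auto

lemma Pz_diff: "Pz D t - Pz D (t - 1) = pmf D t"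
proof -
  have "{z. z \<le> t} = {z. z \<le> t - 1} \<union> {t}" by auto
  then have "Pz D t = measure_pmf.prob D ({z. z \<le> t - 1} \<union> {t})" unfolding Pz_def by simp
  also have "\<dots> = Pz D (t - 1) + measure_pmf.prob D {t}"
    unfolding Pz_def by (rule measure_pmf.finite_measure_Union) auto
  finally show ?thesis by (simp add: measure_pmf_single)
qed

lemma dlap_sym: assumes e0: "e0 > 0" shows "map_pmf uminus (dlap e0) = dlap e0"
proof (rule pmf_eqI)
  fix x :: int
  have "pmf (map_pmf uminus (dlap e0)) (- (- x)) = pmf (dlap e0) (- x)"
    by (rule pmf_map_inj') (auto simp: inj_on_def)
  then show "pmf (map_pmf uminus (dlap e0)) x = pmf (dlap e0) x" by (simp add: pmf_dlap[OF e0])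
qed

lemma Pz_half: assumes e0: "e0 > 0" shows "Pz (dlap e0) 0 \<ge> 1 / 2"
proof -
  let ?D = "dlap e0"
  have "measure_pmf.prob ?D {z. 0 \<le> z} = measure_pmf.prob (map_pmf uminus ?D) {z. 0 \<le> z}"
    by (simp add: dlap_sym[OF e0])
  also have "\<dots> = measure_pmf.prob ?D {z. z \<le> 0}" by (simp add: vimage_def)
  finally have sym: "measure_pmf.prob ?D {z. 0 \<le> z} = Pz ?D 0" unfolding Pz_def .
  have U: "{z::int. z \<le> 0} \<union> {z. 0 \<le> z} = UNIV" by auto
  have "1 = measure_pmf.prob ?D ({z. z \<le> 0} \<union> {z. 0 \<le> z})"
    unfolding U by simp
  also have "\<dots> \<le> measure_pmf.prob ?D {z. z \<le> 0} + measure_pmf.prob ?D {z. 0 \<le> z}"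
    by (rule measure_subadditive) auto
  finally show ?thesis using sym unfolding Pz_def by simp
qed

lemma binom_half:
  shows "2 * (\<Sum>x\<le>(m + 1) div 2. real (m choose x)) \<ge> 2 ^ m"
proof -
  define T where "T = (m + 1) div 2"
  have Tm: "T \<le> m" "m \<le> 2 * T" unfolding T_def by linarith+
  have cover: "{..m} \<subseteq> {..T} \<union> {m - T..m}" using Tm by auto
  have "(2::real) ^ m = (\<Sum>x\<le>m. real (m choose x))"
    using choose_row_sum[of m] by (metis of_nat_numeral of_nat_power of_nat_sum)
  also have "\<dots> \<le> (\<Sum>x\<in>{..T} \<union> {m - T..m}. real (m choose x))"
    using cover by (intro sum_mono2) auto
  also have "\<dots> \<le> (\<Sum>x\<le>T. real (m choose x)) + (\<Sum>x\<in>{m - T..m}. real (m choose x))"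
  proof -
    have "(\<Sum>x\<in>{..T} \<inter> {m - T..m}. real (m choose x)) \<ge> 0" by (rule sum_nonneg) auto
    then show ?thesis by (subst sum_Un) auto
  qed
  also have "(\<Sum>x\<in>{m - T..m}. real (m choose x)) = (\<Sum>x\<le>T. real (m choose x))"
  proof -
    have bij: "bij_betw (\<lambda>x. m - x) {..T} {m - T..m}"
      using Tm by (intro bij_betwI[where g = "\<lambda>x. m - x"]) auto
    have "(\<Sum>x\<in>{m - T..m}. real (m choose x)) = (\<Sum>x\<le>T. real (m choose (m - x)))"
      by (rule sum.reindex_bij_betw[OF bij, symmetric])
    also have "\<dots> = (\<Sum>x\<le>T. real (m choose x))"
      using Tm by (intro sum.cong refl) (auto simp: binomial_symmetric[symmetric])
    finally show ?thesis .
  qed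
  finally show ?thesis unfolding T_def by simp
qed

lemma ceil_half_nat: "\<lceil>(real (m + 1) - 1) / 2\<rceil> = int ((m + 1) div 2)"
proof -
  have "(real (m + 1) - 1) / 2 = real m / 2" by simp
  moreover have "\<lceil>real m / 2\<rceil> = int ((m + 1) div 2)"
  proof (cases "even m")
    case True
    then obtain k where "m = 2 * k" by (auto elim: evenE)
    then show ?thesis by simp
  next
    case False
    then obtain k where m: "m = 2 * k + 1" by (auto elim: oddE)
    have "\<lceil>real m / 2\<rceil> = int k + 1"
      unfolding m by (intro ceiling_unique) (auto simp: field_simps)
    moreover have "(m + 1) div 2 = k + 1" unfolding m by simp
    ultimately show ?thesis by simp
  qed
  ultimately show ?thesis by simp
qed



lemma Pz_abs: "\<bar>Pz D t\<bar> \<le> 1"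
  using Pz_nonneg[of D t] Pz_le1[of D t] by simp

lemma deg_Nb:
  assumes sg: "simple_graph n E" and uv: "{u, v} \<in> E"
  shows "degree E u = card (Nb E u v) + 1" "Nb E u v \<subseteq> {..<n} - {u, v}"
proof -
  have fin: "finite {w. {w, u} \<in> E}" using nb_finite[OF sg, of u "\<lambda>_. True"] by simp
  have vin: "v \<in> {w. {w, u} \<in> E}" using uv by (simp add: insert_commute)
  show "degree E u = card (Nb E u v) + 1"
  proof -
    have "card {w. {w, u} \<in> E} > 0" using fin vin by (auto simp: card_gt_0_iff)
    then show ?thesis unfolding degree_def Nb_def using fin vin by (simp add: card_Diff_singleton)
  qed
  show "Nb E u v \<subseteq> {..<n} - {u, v}"
  proof
    fix w assume "w \<in> Nb E u v"
    then have w: "{w, u} \<in> E" "w \<noteq> v" unfolding Nb_def by auto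
    then show "w \<in> {..<n} - {u, v}" using sg_mem[OF sg w(1)] by auto
  qed
qed

lemma Nb_disj:
  assumes tf: "triangle_free E" and uv: "{u, v} \<in> E"
  shows "Nb E u v \<inter> Nb E v u = {}"
proof (rule ccontr)
  assume "Nb E u v \<inter> Nb E v u \<noteq> {}"
  then obtain w where "{w, u} \<in> E" "{w, v} \<in> E" unfolding Nb_def by auto
  then have "{u, v} \<in> E \<and> {v, w} \<in> E \<and> {u, w} \<in> E" using uv by (simp add: insert_commute)
  then show False using tf unfolding triangle_free_def by blast
qed

lemma pu_props:
  fixes e0 :: real and m :: nat
  assumes e0: "e0 > 0"
  defines "p \<equiv> (\<lambda>k::int. \<Sum>x\<le>m. real (m choose x) / 2 ^ m * Pz (dlap e0) (int ((m + 1) div 2) - k - int x))"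
  shows "p 0 - p 1 = Dl e0 m" "p 0 \<ge> 1 / 4" "p 1 \<ge> 0" "Dl e0 m \<ge> 0"
proof -
  let ?D = "dlap e0" and ?T = "int ((m + 1) div 2)"
  have "p 0 - p 1 = (\<Sum>x\<le>m. real (m choose x) / 2 ^ m * (Pz ?D (?T - int x) - Pz ?D (?T - int x - 1)))"
    unfolding p_def by (simp add: sum_subtractf[symmetric] algebra_simps)
  also have "\<dots> = Dl e0 m" unfolding Dl_def Pz_diff by simp
  finally show "p 0 - p 1 = Dl e0 m" .
  show "p 1 \<ge> 0" unfolding p_def by (intro sum_nonneg mult_nonneg_nonneg Pz_nonneg) auto
  show "Dl e0 m \<ge> 0" unfolding Dl_def by (intro sum_nonneg) auto
  define T where "T = (m + 1) div 2"
  have Tm: "T \<le> m" unfolding T_def by linarith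
  have p0: "p 0 = (\<Sum>x\<le>m. real (m choose x) / 2 ^ m * Pz ?D (?T - int x))" unfolding p_def by simp
  have "p 0 \<ge> (\<Sum>x\<le>T. real (m choose x) / 2 ^ m * Pz ?D (?T - int x))"
    unfolding p0 using Tm by (intro sum_mono2) (auto intro!: mult_nonneg_nonneg divide_nonneg_nonneg Pz_nonneg simp del: divide_le_0_iff)
  moreover have "(\<Sum>x\<le>T. real (m choose x) / 2 ^ m * Pz ?D (?T - int x)) \<ge> (\<Sum>x\<le>T. real (m choose x) / 2 ^ m * (1 / 2))"
  proof (intro sum_mono mult_left_mono)
    fix x assume "x \<in> {..T}"
    then have "0 \<le> ?T - int x" unfolding T_def by simp
    then have "Pz ?D 0 \<le> Pz ?D (?T - int x)" by (rule Pz_mono)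
    then show "1 / 2 \<le> Pz ?D (?T - int x)" using Pz_half[OF e0] by linarith
  qed simp
  moreover have "(\<Sum>x\<le>T. real (m choose x) / 2 ^ m * (1 / 2)) = (\<Sum>x\<le>T. real (m choose x)) / 2 ^ m / 2"
    by (simp add: sum_divide_distrib[symmetric] sum_distrib_right[symmetric])
  moreover have "(\<Sum>x\<le>T. real (m choose x)) / 2 ^ m / 2 \<ge> 1 / 4"
    using binom_half[of m] unfolding T_def[symmetric] by (simp add: field_simps)
  ultimately show "p 0 \<ge> 1 / 4" by linarith
qed

lemma util_part:
  fixes eps :: real
  assumes eps: "eps > 0" and sg: "simple_graph n E" and tf: "triangle_free E" and uv: "{u, v} \<in> E"
  shows "measure_pmf.prob (alg eps n E) {S. (u \<in> S) \<noteq> (v \<in> S)}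
           \<ge> 1 / 2 + (Dl (eps / 2) (card (Nb E u v)) + Dl (eps / 2) (card (Nb E v u))) / 32"
proof -
  define D where "D = dlap (eps / 2)"
  define Q where "Q = pair_pmf coin (pair_pmf coin D)"
  define R where "R = {..<n} - {u, v}"
  define G where "G = Pi_pmf R (False, False, 0) (\<lambda>_. Q)"
  define N1 where "N1 = Nb E u v"
  define N2 where "N2 = Nb E v u"
  define mu where "mu = card N1"
  define mv where "mv = card N2"
  define pu where "pu k = (\<Sum>x\<le>mu. real (mu choose x) / 2 ^ mu * Pz D (int ((mu + 1) div 2) - k - int x))" for k :: int
  define pv where "pv k = (\<Sum>x\<le>mv. real (mv choose x) / 2 ^ mv * Pz D (int ((mv + 1) div 2) - k - int x))" for k :: int
  define X where "X a b g = Pz D (tq E u v g a b) * Pz D (tq E v u g b a)" for a b g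
  have e0: "eps / 2 > 0" using eps by simp
  have vu: "{v, u} \<in> E" using uv by (simp add: insert_commute)
  have finR: "finite R" unfolding R_def by simp
  have dU: "degree E u = mu + 1" "N1 \<subseteq> R" using deg_Nb[OF sg uv] unfolding mu_def N1_def R_def by auto
  have dV: "degree E v = mv + 1" "N2 \<subseteq> R" using deg_Nb[OF sg vu] unfolding mv_def N2_def R_def by (auto simp: insert_commute)
  have disj: "N1 \<inter> N2 = {}" unfolding N1_def N2_def by (rule Nb_disj[OF tf uv])
  have TTu: "TT E u = int ((mu + 1) div 2)" unfolding TT_def dU(1) by (rule ceil_half_nat)
  have TTv: "TT E v = int ((mv + 1) div 2)" unfolding TT_def dV(1) by (rule ceil_half_nat)
  have EX: "(\<integral>g. X a b g \<partial>measure_pmf G) = pu (if a = b then 1 else 0) * pv (if a = b then 1 else 0)" for a b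
  proof -
    have "(\<integral>g. X a b g \<partial>measure_pmf G) =
          (\<integral>g. (\<lambda>x. Pz D (int ((mu + 1) div 2) - (if a = b then 1 else 0) - int x)) (card {w \<in> N1. fst (g w) = a})
             * (\<lambda>y. Pz D (int ((mv + 1) div 2) - (if a = b then 1 else 0) - int y)) (card {w \<in> N2. fst (g w) = b}) \<partial>measure_pmf G)"
      unfolding X_def tq_def Kc_def TTu TTv N1_def N2_def by (simp add: eq_commute[of b a])
    also have "\<dots> = pu (if a = b then 1 else 0) * pv (if a = b then 1 else 0)"
      unfolding G_def Q_def pu_def pv_def mu_def mv_def
      by (rule indep_counts[OF finR dU(2) dV(2) disj]) (rule Pz_abs, rule Pz_abs)
    finally show ?thesis .
  qed
  have intX: "integrable (measure_pmf G) (X a b)" for a b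
    by (rule integrable_bounded_pmf[where B = 1])
       (auto simp: X_def abs_mult Pz_nonneg Pz_le1 intro!: mult_le_one)
  have "measure_pmf.prob (alg eps n E) {S. (u \<in> S) \<noteq> (v \<in> S)}
        = (\<integral>g. 1 / 2 + 1 / 8 * (X True False g + X False True g - X True True g - X False False g) \<partial>measure_pmf G)"
    unfolding X_def G_def Q_def R_def D_def by (rule prob_cut_inner[OF sg uv])
  also have "\<dots> = 1 / 2 + 1 / 8 * ((\<integral>g. X True False g \<partial>measure_pmf G) + (\<integral>g. X False True g \<partial>measure_pmf G)
                     - (\<integral>g. X True True g \<partial>measure_pmf G) - (\<integral>g. X False False g \<partial>measure_pmf G))"
    using intX by simp
  also have "\<dots> = 1 / 2 + (pu 0 * pv 0 - pu 1 * pv 1) / 4" unfolding EX by simp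
  finally have P: "measure_pmf.prob (alg eps n E) {S. (u \<in> S) \<noteq> (v \<in> S)} = 1 / 2 + (pu 0 * pv 0 - pu 1 * pv 1) / 4" .
  have U: "pu 0 - pu 1 = Dl (eps / 2) mu" "pu 0 \<ge> 1 / 4" "pu 1 \<ge> 0" "Dl (eps / 2) mu \<ge> 0"
    using pu_props[OF e0, of mu] unfolding pu_def D_def by auto
  have V: "pv 0 - pv 1 = Dl (eps / 2) mv" "pv 0 \<ge> 1 / 4" "pv 1 \<ge> 0" "Dl (eps / 2) mv \<ge> 0"
    using pu_props[OF e0, of mv] unfolding pv_def D_def by auto
  define Du where "Du = Dl (eps / 2) mu"
  define Dv where "Dv = Dl (eps / 2) mv"
  have id1: "pu 0 * pv 0 - pu 1 * pv 1 = pu 0 * Dv + Du * pv 1"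
    using U(1) V(1) unfolding Du_def Dv_def by (simp add: algebra_simps)
  have id2: "pu 0 * pv 0 - pu 1 * pv 1 = pv 0 * Du + Dv * pu 1"
    using U(1) V(1) unfolding Du_def Dv_def by (simp add: algebra_simps)
  have a1: "pu 0 * Dv \<ge> 1 / 4 * Dv" using U(2) V(4) unfolding Dv_def by (intro mult_right_mono) auto
  have a2: "Du * pv 1 \<ge> 0" using U(4) V(3) unfolding Du_def by simp
  have a3: "pv 0 * Du \<ge> 1 / 4 * Du" using V(2) U(4) unfolding Du_def by (intro mult_right_mono) auto
  have a4: "Dv * pu 1 \<ge> 0" using V(4) U(3) unfolding Dv_def by simp
  have b1: "pu 0 * pv 0 - pu 1 * pv 1 \<ge> Dv / 4"
  proof -
    have "pu 0 * Dv + Du * pv 1 \<ge> Dv / 4" using a1 a2 by linarith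
    then show ?thesis unfolding id1 .
  qed
  have b2: "pu 0 * pv 0 - pu 1 * pv 1 \<ge> Du / 4"
  proof -
    have "pv 0 * Du + Dv * pu 1 \<ge> Du / 4" using a3 a4 by linarith
    then show ?thesis unfolding id2 .
  qed
  have "pu 0 * pv 0 - pu 1 * pv 1 \<ge> (Du + Dv) / 8" using add_mono[OF b1 b2] by (simp add: field_simps)
  then show ?thesis unfolding P using Du_def Dv_def mu_def mv_def N1_def N2_def by simp
qed

theorem theorem5p5:
  shows "(\<forall>(eps::real) (n::nat) E E' (T :: nat set set).
            eps > 0 \<longrightarrow> n > 0 \<longrightarrow> edge_neighbors n E E' \<longrightarrow>
            measure_pmf.prob (alg eps n E) T \<le> exp eps * measure_pmf.prob (alg eps n E') T)
       \<and> (\<exists>C::real. C > 0 \<and>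
            (\<forall>(eps::real) (n::nat) E u v.
               eps > 0 \<longrightarrow> n > 0 \<longrightarrow> simple_graph n E \<longrightarrow> triangle_free E \<longrightarrow> {u, v} \<in> E \<longrightarrow>
               measure_pmf.prob (alg eps n E) {S. (u \<in> S) \<noteq> (v \<in> S)}
                 \<ge> 1/2 + C * (1 / sqrt (real (degree E u) + 1 / eps^2)
                              + 1 / sqrt (real (degree E v) + 1 / eps^2))))"
proof (intro conjI allI impI)
  fix eps :: real and n :: nat and E E' :: "nat set set" and T :: "nat set set"
  assume "eps > 0" "n > 0" "edge_neighbors n E E'"
  then show "measure_pmf.prob (alg eps n E) T \<le> exp eps * measure_pmf.prob (alg eps n E') T"
    by (intro dp_part) auto
next
  show "\<exists>C::real. C > 0 \<and>
            (\<forall>(eps::real) (n::nat) E u v.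
               eps > 0 \<longrightarrow> n > 0 \<longrightarrow> simple_graph n E \<longrightarrow> triangle_free E \<longrightarrow> {u, v} \<in> E \<longrightarrow>
               measure_pmf.prob (alg eps n E) {S. (u \<in> S) \<noteq> (v \<in> S)}
                 \<ge> 1/2 + C * (1 / sqrt (real (degree E u) + 1 / eps^2)
                              + 1 / sqrt (real (degree E v) + 1 / eps^2)))"
  proof (intro exI[of _ "1 / 2048"] conjI allI impI)
    fix eps :: real and n :: nat and E :: "nat set set" and u v :: nat
    assume eps: "eps > 0" and "n > 0" and sg: "simple_graph n E" and tf: "triangle_free E" and uv: "{u, v} \<in> E"
    have vu: "{v, u} \<in> E" using uv by (simp add: insert_commute)
    have du: "degree E u = card (Nb E u v) + 1" using deg_Nb[OF sg uv] by simp
    have dv: "degree E v = card (Nb E v u) + 1" using deg_Nb[OF sg vu] by simp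
    have lu: "Dl (eps / 2) (card (Nb E u v)) \<ge> 1 / (64 * sqrt (real (degree E u) + 1 / eps ^ 2))"
      using Dl_lower[OF eps, of "card (Nb E u v)"] unfolding du by (simp add: add.commute)
    have lv: "Dl (eps / 2) (card (Nb E v u)) \<ge> 1 / (64 * sqrt (real (degree E v) + 1 / eps ^ 2))"
      using Dl_lower[OF eps, of "card (Nb E v u)"] unfolding dv by (simp add: add.commute)
    have "1 / 2 + 1 / 2048 * (1 / sqrt (real (degree E u) + 1 / eps ^ 2) + 1 / sqrt (real (degree E v) + 1 / eps ^ 2))
          = 1 / 2 + (1 / (64 * sqrt (real (degree E u) + 1 / eps ^ 2)) + 1 / (64 * sqrt (real (degree E v) + 1 / eps ^ 2))) / 32"
      by simp
    also have "\<dots> \<le> 1 / 2 + (Dl (eps / 2) (card (Nb E u v)) + Dl (eps / 2) (card (Nb E v u))) / 32"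
      using lu lv by simp
    also have "\<dots> \<le> measure_pmf.prob (alg eps n E) {S. (u \<in> S) \<noteq> (v \<in> S)}"
      by (rule util_part[OF eps sg tf uv])
    finally show "measure_pmf.prob (alg eps n E) {S. (u \<in> S) \<noteq> (v \<in> S)}
                 \<ge> 1/2 + 1 / 2048 * (1 / sqrt (real (degree E u) + 1 / eps^2)
                              + 1 / sqrt (real (degree E v) + 1 / eps^2))" .
  qed simp
qed


end
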